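(* Let $(S,V)$ be a complete semiring-semimodule pair, let $S'\subseteq S$ contain $0$ and $1$, and let $\mathcal P=(n,\Gamma,I,M,P,p_0,l)$ be an $S'$-$\omega$-pushdown automaton. Set $x_0=I(M^* )_{p_0,\epsilon}P\in S$, $[i,p,j]=((M^* )_{p,\epsilon})_{i,j}\in S$, $z_0=I(M^{\omega,l})_{p_0}\in V$ and $[i,p]=((M^{\omega,l})_p)_i\in V$ for $p\in\Gamma$, $1\le i,j\le n$. Then these values satisfy the system $$x_0=\sum_{1\le m_1,m_2\le n}I_{m_1}[m_1,p_0,m_2]P_{m_2},$$ $$[i,p,j]=\sum_{k\ge0}\sum_{p_1,\dots,p_k\in\Gamma}\sum_{1\le m_1,\dots,m_k\le n}(M_{p,p_1\dots p_k})_{i,m_1}[m_1,p_1,m_2][m_2,p_2,m_3]\cdots[m_k,p_k,j]\quad(p\in\Gamma,\ 1\le i,j\le n),$$ $$z_0=\sum_{1\le m\le n}I_m[m,p_0],$$ $$[i,p]=\sum_{k\ge1}\sum_{p_1,\dots,p_k\in\Gamma}\sum_{1\le j\le k}\sum_{1\le m_1,\dots,m_j\le n}(M_{p,p_1\dots p_k})_{i,m_1}[m_1,p_1,m_2]\cdots[m_{j-1},p_{j-1},m_j][m_j,p_j]\quad(p\in\Gamma,\ 1\le i\le n)$$ (this solution is called the solution of order $l$), and $\|\mathcal P\|=(I(M^* )_{p_0,\epsilon}P,\ I(M^{\omega,l})_{p_0})$.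
   Context: A complete semiring-semimodule pair $(S,V)$ (in the sense of Ésik and Kuich, "Modern Automata Theory") consists of a complete starsemiring $S$ (arbitrary sums with infinite associativity/commutativity/distributivity laws, star $s^*=\sum_{j\ge0}s^j$) and a complete $S$-semimodule $V$, with infinite products $\prod_{j\ge1}s_j\in V$ of sequences in $S$ satisfying the axioms of that framework. In the second equation the term for $k=0$ is $(M_{p,\epsilon})_{i,j}$, and in general the last triple is $[m_k,p_k,j]$ (i.e. $m_{k+1}=j$). A pushdown transition matrix $M\in (S'^{n\times n})^{\Gamma^*\times\Gamma^*}$ ($\Gamma^*\times\Gamma^*$ matrix with $n\times n$ blocks over $S'$) satisfies (i) for each $p\in\Gamma$ only finitely many blocks $M_{p,\pi}$ are nonzero, and (ii) $M_{\pi_1,\pi_2}=M_{p,\pi}$ if $\pi_1=p\pi'$, $\pi_2=\pi\pi'$ for some $p\in\Gamma$, $\pi,\pi'\in\Gamma^*$, and $0$ otherwise. An $S'$-$\omega$-pushdown automaton $\mathcal P=(n,\Gamma,I,M,P,p_0,l)$ consists of $n\ge1$ (states $1,\dots,n$), an alphabet $\Gamma$, such an $M$, $I\in S'^{1\times n}$, $P\in S'^{n\times 1}$, $p_0\in\Gamma$ and $l\in\{0,\dots,n\}$. $M^*=\sum_{m\ge0}M^m$ with blocks $(M^* )_{\pi,\pi'}$; with $P_l=\{(j_1,j_2,\dots)\in\{1,\dots,n\}^\omega\mid j_t\le l\text{ for infinitely many }t\}$, $M^{\omega,l}\in (V^n)^{\Gamma^*}$ is given by $((M^{\omega,l})_\pi)_i=\sum_{\pi_1,\pi_2,\ldots\in\Gamma^*}\sum_{(j_1,j_2,\ldots)\in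 P_l}(M_{\pi,\pi_1})_{i,j_1}(M_{\pi_1,\pi_2})_{j_1,j_2}\cdots$. The behavior $\|\mathcal P\|=I(M^* )_{p_0,\epsilon}P+I(M^{\omega,l})_{p_0}$ is viewed as the pair $(I(M^* )_{p_0,\epsilon}P,I(M^{\omega,l})_{p_0})$ in the quemiring $S\times V$. *)

theory Defs
  imports "HOL-Library.Countable"
begin

text \<open>Infinite sums are taken over index sets that are subsets of the fixed
  index type idx (of the cardinality of the continuum). Sums over index sets of
  other types are transported along a fixed injection into idx (see gsum).\<close>

type_synonym idx = "nat \<Rightarrow> nat"

definition complete_monoid :: "((idx \<Rightarrow> 'a::comm_monoid_add) \<Rightarrow> idx set \<Rightarrow> 'a) \<Rightarrow> bool" where
  "complete_monoid \<sigma> \<longleftrightarrow>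
     (\<forall>f g A. (\<forall>x\<in>A. f x = g x) \<longrightarrow> \<sigma> f A = \<sigma> g A) \<and>
     (\<forall>f A. finite A \<longrightarrow> \<sigma> f A = sum f A) \<and>
     (\<forall>f (J::idx set) (Q::idx \<Rightarrow> idx set).
        (\<forall>j\<in>J. \<forall>k\<in>J. j \<noteq> k \<longrightarrow> Q j \<inter> Q k = {}) \<longrightarrow>
        \<sigma> (\<lambda>j. \<sigma> f (Q j)) J = \<sigma> f (\<Union>j\<in>J. Q j))"

definition complete_semiring :: "((idx \<Rightarrow> 's::semiring_1) \<Rightarrow> idx set \<Rightarrow> 's) \<Rightarrow> bool" where
  "complete_semiring \<sigma> \<longleftrightarrow> complete_monoid \<sigma> \<and>
     (\<forall>c f A. \<sigma> (\<lambda>i. c * f i) A = c * \<sigma> f A) \<and>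
     (\<forall>c f A. \<sigma> (\<lambda>i. f i * c) A = \<sigma> f A * c)"

definition complete_semimodule ::
  "((idx \<Rightarrow> 's::semiring_1) \<Rightarrow> idx set \<Rightarrow> 's) \<Rightarrow> ((idx \<Rightarrow> 'v::comm_monoid_add) \<Rightarrow> idx set \<Rightarrow> 'v)
     \<Rightarrow> ('s \<Rightarrow> 'v \<Rightarrow> 'v) \<Rightarrow> bool" where
  "complete_semimodule \<sigma>S \<sigma>V act \<longleftrightarrow> complete_monoid \<sigma>V \<and>
     (\<forall>s v w. act s (v + w) = act s v + act s w) \<and>
     (\<forall>s t v. act (s + t) v = act s v + act t v) \<and>
     (\<forall>s t v. act (s * t) v = act s (act t v)) \<and>
     (\<forall>v. act 1 v = v) \<and> (\<forall>v. act 0 v = 0) \<and> (\<forall>s. act s 0 = 0) \<and>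
     (\<forall>s f A. act s (\<sigma>V f A) = \<sigma>V (\<lambda>i. act s (f i)) A) \<and>
     (\<forall>f v A. act (\<sigma>S f A) v = \<sigma>V (\<lambda>i. act (f i) v) A)"

definition gsum :: "((idx \<Rightarrow> 'a) \<Rightarrow> idx set \<Rightarrow> 'a) \<Rightarrow> ('t \<Rightarrow> idx) \<Rightarrow> ('t \<Rightarrow> 'a) \<Rightarrow> 't set \<Rightarrow> 'a" where
  "gsum \<sigma> e f A = \<sigma> (\<lambda>u. f (inv_into A e u)) (e ` A)"

definition enc_cnt :: "'a::countable \<Rightarrow> idx" where
  "enc_cnt x = (\<lambda>_. to_nat x)"

definition enc_cseq :: "(nat \<Rightarrow> 'a::countable) \<Rightarrow> idx" where
  "enc_cseq f = to_nat \<circ> f"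

definition enc_iseq :: "(nat \<Rightarrow> idx) \<Rightarrow> idx" where
  "enc_iseq F = (\<lambda>m. case prod_decode m of (a, b) \<Rightarrow> F a b)"

text \<open>Infinite products are indexed from 0: iprod s stands for s 0 * s 1 * s 2 * ...\<close>
definition complete_ssp ::
  "((idx \<Rightarrow> 's::semiring_1) \<Rightarrow> idx set \<Rightarrow> 's) \<Rightarrow> ((idx \<Rightarrow> 'v::comm_monoid_add) \<Rightarrow> idx set \<Rightarrow> 'v)
     \<Rightarrow> ('s \<Rightarrow> 'v \<Rightarrow> 'v) \<Rightarrow> ((nat \<Rightarrow> 's) \<Rightarrow> 'v) \<Rightarrow> bool" where
  "complete_ssp \<sigma>S \<sigma>V act iprod \<longleftrightarrow>
     complete_semiring \<sigma>S \<and> complete_semimodule \<sigma>S \<sigma>V act \<and>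
     (\<forall>s. iprod s = act (s 0) (iprod (\<lambda>t. s (Suc t)))) \<and>
     (\<forall>s g. strict_mono g \<and> g 0 = 0 \<longrightarrow>
        iprod s = iprod (\<lambda>t. prod_list (map s [g t..<g (Suc t)]))) \<and>
     (\<forall>(Ix :: nat \<Rightarrow> idx set) (F :: nat \<Rightarrow> idx \<Rightarrow> 's).
        iprod (\<lambda>t. \<sigma>S (F t) (Ix t)) =
        gsum \<sigma>V enc_iseq (\<lambda>h. iprod (\<lambda>t. F t (h t))) {h. \<forall>t. h t \<in> Ix t})"

text \<open>A Gamma-star x Gamma-star matrix with n x n blocks: M pi1 pi2 i j is the (i,j) entry
  of the block (pi1,pi2); states are 1..n. The block M_{p,pi} for p in Gamma is M [p] pi.\<close>
definition pushdown_matrix :: "nat \<Rightarrow> ('g list \<Rightarrow> 'g list \<Rightarrow> nat \<Rightarrow> nat \<Rightarrow> 's::zero) \<Rightarrow> bool" where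
  "pushdown_matrix n M \<longleftrightarrow>
     (\<forall>p. finite {\<pi>. \<exists>i\<in>{1..n}. \<exists>j\<in>{1..n}. M [p] \<pi> i j \<noteq> 0}) \<and>
     (\<forall>i\<in>{1..n}. \<forall>j\<in>{1..n}.
        (\<forall>p \<pi> \<pi>'. M (p # \<pi>') (\<pi> @ \<pi>') i j = M [p] \<pi> i j) \<and>
        (\<forall>\<pi>1 \<pi>2. \<not> (\<exists>p \<pi> \<pi>'. \<pi>1 = p # \<pi>' \<and> \<pi>2 = \<pi> @ \<pi>') \<longrightarrow> M \<pi>1 \<pi>2 i j = 0))"

definition omega_pda ::
  "'s::semiring_1 set \<Rightarrow> nat \<Rightarrow> ('g list \<Rightarrow> 'g list \<Rightarrow> nat \<Rightarrow> nat \<Rightarrow> 's) \<Rightarrow> (nat \<Rightarrow> 's) \<Rightarrow> (nat \<Rightarrow> 's)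
     \<Rightarrow> 'g \<Rightarrow> nat \<Rightarrow> bool" where
  "omega_pda S' n M I P p0 l \<longleftrightarrow>
     1 \<le> n \<and> l \<le> n \<and> pushdown_matrix n M \<and>
     (\<forall>p \<pi>. \<forall>i\<in>{1..n}. \<forall>j\<in>{1..n}. M [p] \<pi> i j \<in> S') \<and>
     (\<forall>i\<in>{1..n}. I i \<in> S' \<and> P i \<in> S')"

fun mpow :: "((idx \<Rightarrow> 's::semiring_1) \<Rightarrow> idx set \<Rightarrow> 's) \<Rightarrow> nat \<Rightarrow>
    ('g::countable list \<Rightarrow> 'g list \<Rightarrow> nat \<Rightarrow> nat \<Rightarrow> 's) \<Rightarrow> nat \<Rightarrow> 'g list \<Rightarrow> 'g list \<Rightarrow> nat \<Rightarrow> nat \<Rightarrow> 's" where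
  "mpow \<sigma> n M 0 \<pi>1 \<pi>2 i j = (if \<pi>1 = \<pi>2 \<and> i = j then 1 else 0)"
| "mpow \<sigma> n M (Suc m) \<pi>1 \<pi>2 i j =
     gsum \<sigma> enc_cnt (\<lambda>(\<pi>, k). M \<pi>1 \<pi> i k * mpow \<sigma> n M m \<pi> \<pi>2 k j) (UNIV \<times> {1..n})"

definition mstar :: "((idx \<Rightarrow> 's::semiring_1) \<Rightarrow> idx set \<Rightarrow> 's) \<Rightarrow> nat \<Rightarrow>
    ('g::countable list \<Rightarrow> 'g list \<Rightarrow> nat \<Rightarrow> nat \<Rightarrow> 's) \<Rightarrow> 'g list \<Rightarrow> 'g list \<Rightarrow> nat \<Rightarrow> nat \<Rightarrow> 's" where
  "mstar \<sigma> n M \<pi>1 \<pi>2 i j = gsum \<sigma> enc_cnt (\<lambda>m. mpow \<sigma> n M m \<pi>1 \<pi>2 i j) UNIV"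

text \<open>M^{omega,l}: q t = (pi_(t+1), j_(t+1)) and (pi_0, j_0) = (pi, i); the t-th factor is
  the (j_t, j_(t+1)) entry of the block M_(pi_t, pi_(t+1)).\<close>
definition prev_cfg :: "'g list \<Rightarrow> nat \<Rightarrow> (nat \<Rightarrow> 'g list \<times> nat) \<Rightarrow> nat \<Rightarrow> 'g list \<times> nat" where
  "prev_cfg \<pi> i q t = (if t = 0 then (\<pi>, i) else q (t - 1))"

definition momega :: "((idx \<Rightarrow> 'v::comm_monoid_add) \<Rightarrow> idx set \<Rightarrow> 'v) \<Rightarrow> ((nat \<Rightarrow> 's::semiring_1) \<Rightarrow> 'v)
    \<Rightarrow> nat \<Rightarrow> nat \<Rightarrow> ('g::countable list \<Rightarrow> 'g list \<Rightarrow> nat \<Rightarrow> nat \<Rightarrow> 's) \<Rightarrow> 'g list \<Rightarrow> nat \<Rightarrow> 'v" where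
  "momega \<sigma>V iprod n l M \<pi> i =
     gsum \<sigma>V enc_cseq
       (\<lambda>q. iprod (\<lambda>t. M (fst (prev_cfg \<pi> i q t)) (fst (q t)) (snd (prev_cfg \<pi> i q t)) (snd (q t))))
       {q. (\<forall>t. snd (q t) \<in> {1..n}) \<and> infinite {t. snd (q t) \<le> l}}"

definition pda_behavior ::
  "((idx \<Rightarrow> 's::semiring_1) \<Rightarrow> idx set \<Rightarrow> 's) \<Rightarrow> ((idx \<Rightarrow> 'v::comm_monoid_add) \<Rightarrow> idx set \<Rightarrow> 'v)
     \<Rightarrow> ('s \<Rightarrow> 'v \<Rightarrow> 'v) \<Rightarrow> ((nat \<Rightarrow> 's) \<Rightarrow> 'v) \<Rightarrow> nat \<Rightarrow> ('g::countable list \<Rightarrow> 'g list \<Rightarrow> nat \<Rightarrow> nat \<Rightarrow> 's)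
     \<Rightarrow> (nat \<Rightarrow> 's) \<Rightarrow> (nat \<Rightarrow> 's) \<Rightarrow> 'g \<Rightarrow> nat \<Rightarrow> 's \<times> 'v" where
  "pda_behavior \<sigma>S \<sigma>V act iprod n M I P p0 l =
     ((\<Sum>j\<in>{1..n}. (\<Sum>m\<in>{1..n}. I m * mstar \<sigma>S n M [p0] [] m j) * P j),
      (\<Sum>m\<in>{1..n}. act (I m) (momega \<sigma>V iprod n l M [p0] m)))"

end

theory Submission
  imports Defs
begin

lemma inj_enc_cnt: "inj enc_cnt"
  unfolding enc_cnt_def inj_def by (metis to_nat_split)

lemma inj_enc_cseq: "inj enc_cseq"
proof (rule injI)
  fix f g :: "nat \<Rightarrow> 'a::countable" assume "enc_cseq f = enc_cseq g"
  hence "\<And>t. to_nat (f t) = to_nat (g t)" unfolding enc_cseq_def by (metis comp_apply)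
  thus "f = g" by (auto intro: ext)
qed

locale cm =
  fixes \<sigma> :: "(idx \<Rightarrow> 'a::comm_monoid_add) \<Rightarrow> idx set \<Rightarrow> 'a"
  assumes cmon: "complete_monoid \<sigma>"
  and zero: "\<And>A. \<sigma> (\<lambda>_. 0) A = 0"
begin

lemma cong: "(\<And>x. x\<in>A \<Longrightarrow> f x = g x) \<Longrightarrow> \<sigma> f A = \<sigma> g A"
  using cmon[unfolded complete_monoid_def, THEN conjunct1, rule_format, of A f g] by blast

lemma fin: "finite A \<Longrightarrow> \<sigma> f A = sum f A"
  using cmon[unfolded complete_monoid_def, THEN conjunct2, THEN conjunct1, rule_format, of A f] by blast

lemma part: "(\<And>j k. j\<in>J \<Longrightarrow> k\<in>J \<Longrightarrow> j\<noteq>k \<Longrightarrow> Q j \<inter> Q k = {}) \<Longrightarrow>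
   \<sigma> (\<lambda>j. \<sigma> f (Q j)) J = \<sigma> f (\<Union>j\<in>J. Q j)"
  using cmon[unfolded complete_monoid_def, THEN conjunct2, THEN conjunct2, rule_format, of J Q f] by blast

lemma reidx: assumes "bij_betw h B A" shows "\<sigma> f A = \<sigma> (\<lambda>b. f (h b)) B"
proof -
  have "\<sigma> (\<lambda>b. f (h b)) B = \<sigma> (\<lambda>b. \<sigma> f {h b}) B" by (rule cong) (simp add: fin)
  also have "\<dots> = \<sigma> f (\<Union>b\<in>B. {h b})"
    by (rule part) (use assms in \<open>auto simp: bij_betw_def inj_on_def\<close>)
  also have "(\<Union>b\<in>B. {h b}) = A" using assms by (auto simp: bij_betw_def)
  finally show ?thesis by simp
qed

lemma gsum_cong: "(\<And>x. x\<in>A \<Longrightarrow> f x = g x) \<Longrightarrow> gsum \<sigma> e f A = gsum \<sigma> e g A"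
  unfolding gsum_def by (rule cong) (metis imageI inv_into_into)

lemma gsum_fin: assumes "finite A" "inj_on e A" shows "gsum \<sigma> e f A = sum f A"
proof -
  have "gsum \<sigma> e f A = sum (\<lambda>u. f (inv_into A e u)) (e ` A)"
    unfolding gsum_def using assms by (simp add: fin)
  also have "\<dots> = sum f A" using assms by (simp add: sum.reindex)
  finally show ?thesis .
qed

lemma gsum_reindex:
  assumes "inj_on e A" "inj_on e' B" "bij_betw h B A"
  shows "gsum \<sigma> e f A = gsum \<sigma> e' (\<lambda>b. f (h b)) B"
proof -
  define k where "k u = e (h (inv_into B e' u))" for u
  have bk: "bij_betw k (e' ` B) (e ` A)"
  proof -
    have "bij_betw (inv_into B e') (e' ` B) B" using assms(2) by (rule bij_betw_inv_into[OF inj_on_imp_bij_betw])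
    moreover have "bij_betw e A (e ` A)" using assms(1) by (rule inj_on_imp_bij_betw)
    ultimately have "bij_betw (e \<circ> h \<circ> inv_into B e') (e' ` B) (e ` A)"
      using assms(3) by (meson bij_betw_trans)
    thus ?thesis unfolding k_def comp_def by simp
  qed
  have "gsum \<sigma> e f A = \<sigma> (\<lambda>u. f (inv_into A e (k u))) (e' ` B)"
    unfolding gsum_def by (rule reidx[OF bk])
  also have "\<dots> = gsum \<sigma> e' (\<lambda>b. f (h b)) B" unfolding gsum_def
  proof (rule cong)
    fix u assume "u \<in> e' ` B"
    hence "inv_into B e' u \<in> B" by (auto intro: inv_into_into)
    hence "h (inv_into B e' u) \<in> A" using assms(3) by (auto simp: bij_betw_def)
    thus "f (inv_into A e (k u)) = f (h (inv_into B e' u))" unfolding k_def using assms(1) by simp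
  qed
  finally show ?thesis .
qed

lemma gsum_indep: "inj_on e A \<Longrightarrow> inj_on e' A \<Longrightarrow> gsum \<sigma> e f A = gsum \<sigma> e' f A"
  using gsum_reindex[of e A e' A id] by simp

lemma gsum_image: "inj_on h B \<Longrightarrow> inj_on e (h ` B) \<Longrightarrow> inj_on e' B \<Longrightarrow>
    gsum \<sigma> e f (h ` B) = gsum \<sigma> e' (\<lambda>b. f (h b)) B"
  by (rule gsum_reindex) (auto simp: bij_betw_def)

lemma gsum_zero: "gsum \<sigma> e (\<lambda>_. 0) A = 0"
  unfolding gsum_def by (simp add: zero)

lemma gsum_part:
  assumes "inj_on e (\<Union>j\<in>J. Q j)" "inj_on e' J"
    and disj: "\<And>j k. j\<in>J \<Longrightarrow> k\<in>J \<Longrightarrow> j\<noteq>k \<Longrightarrow> Q j \<inter> Q k = {}"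
  shows "gsum \<sigma> e f (\<Union>j\<in>J. Q j) = gsum \<sigma> e' (\<lambda>j. gsum \<sigma> e f (Q j)) J"
proof -
  let ?U = "\<Union>j\<in>J. Q j"
  define F where "F w = f (inv_into ?U e w)" for w
  define Q' where "Q' u = e ` Q (inv_into J e' u)" for u
  have "gsum \<sigma> e' (\<lambda>j. gsum \<sigma> e f (Q j)) J = \<sigma> (\<lambda>u. gsum \<sigma> e f (Q (inv_into J e' u))) (e' ` J)"
    unfolding gsum_def ..
  also have "\<dots> = \<sigma> (\<lambda>u. \<sigma> F (Q' u)) (e' ` J)"
  proof (rule cong)
    fix u assume u: "u \<in> e' ` J"
    hence j: "inv_into J e' u \<in> J" by (auto intro: inv_into_into)
    show "gsum \<sigma> e f (Q (inv_into J e' u)) = \<sigma> F (Q' u)" unfolding gsum_def Q'_def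
    proof (rule cong)
      fix w assume "w \<in> e ` Q (inv_into J e' u)"
      then obtain x where x: "x \<in> Q (inv_into J e' u)" "w = e x" by auto
      have "x \<in> ?U" using x j by auto
      have i1: "inj_on e (Q (inv_into J e' u))" using j by (intro inj_on_subset[OF assms(1)]) blast
      have "inv_into (Q (inv_into J e' u)) e (e x) = x" using i1 x(1) by (rule inv_into_f_f)
      moreover have "inv_into ?U e (e x) = x" using assms(1) \<open>x \<in> ?U\<close> by (rule inv_into_f_f)
      ultimately show "f (inv_into (Q (inv_into J e' u)) e w) = F w" unfolding F_def x(2) by simp
    qed
  qed
  also have "\<dots> = \<sigma> F (\<Union>u\<in>e' ` J. Q' u)"
  proof (rule part)
    fix u v assume uv: "u \<in> e' ` J" "v \<in> e' ` J" "u \<noteq> v"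
    then obtain a b where ab: "a\<in>J" "b\<in>J" "u = e' a" "v = e' b" by auto
    hence "a \<noteq> b" using uv by auto
    hence "Q a \<inter> Q b = {}" using disj ab by auto
    moreover have "Q a \<union> Q b \<subseteq> ?U" using ab by auto
    moreover have "e ` (Q a \<inter> Q b) = e ` Q a \<inter> e ` Q b"
      using assms(1) calculation(2) by (intro inj_on_image_Int) auto
    ultimately have "e ` Q a \<inter> e ` Q b = {}" by simp
    thus "Q' u \<inter> Q' v = {}" unfolding Q'_def using ab assms(2) by simp
  qed
  also have "(\<Union>u\<in>e' ` J. Q' u) = e ` ?U" unfolding Q'_def using assms(2) by auto
  also have "\<sigma> F (e ` ?U) = gsum \<sigma> e f ?U" unfolding gsum_def F_def ..
  finally show ?thesis ..
qed

lemma gsum_Un: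
  assumes "inj_on e (A \<union> B)" "A \<inter> B = {}"
  shows "gsum \<sigma> e f (A \<union> B) = gsum \<sigma> e f A + gsum \<sigma> e f B"
proof -
  define Q where "Q (j::nat) = (if j = 0 then A else B)" for j
  have U: "A \<union> B = (\<Union>j\<in>{0,1}. Q j)" unfolding Q_def by auto
  have "gsum \<sigma> e f (A \<union> B) = gsum \<sigma> enc_cnt (\<lambda>j. gsum \<sigma> e f (Q j)) {0,1}"
  proof (unfold U, rule gsum_part)
    show "inj_on e (\<Union>j\<in>{0,1}. Q j)" using assms(1) U by simp
    show "inj_on enc_cnt {0::nat,1}" using inj_enc_cnt by (rule inj_on_subset) simp
    show "\<And>j k. j\<in>{0::nat,1} \<Longrightarrow> k\<in>{0,1} \<Longrightarrow> j\<noteq>k \<Longrightarrow> Q j \<inter> Q k = {}"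
      using assms(2) unfolding Q_def by auto
  qed
  also have "\<dots> = gsum \<sigma> e f A + gsum \<sigma> e f B"
    using gsum_fin[of "{0::nat,1}" enc_cnt "\<lambda>j. gsum \<sigma> e f (Q j)"] inj_on_subset[OF inj_enc_cnt]
    by (simp add: Q_def inj_eq[OF inj_enc_cnt])
  finally show ?thesis .
qed

lemma gsum_sub:
  assumes "B \<subseteq> A" "inj_on e A" "\<And>x. x \<in> A - B \<Longrightarrow> f x = 0"
  shows "gsum \<sigma> e f A = gsum \<sigma> e f B"
proof -
  have "A = B \<union> (A - B)" using assms by auto
  hence "gsum \<sigma> e f A = gsum \<sigma> e f B + gsum \<sigma> e f (A - B)"
    using gsum_Un[of e B "A - B" f] assms(2) by auto
  also have "gsum \<sigma> e f (A - B) = gsum \<sigma> e (\<lambda>_. 0) (A - B)" by (rule gsum_cong) (use assms in auto)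
  finally show ?thesis by (simp add: gsum_zero)
qed

lemma gsum_Sigma:
  assumes "inj_on e (Sigma A B)" "inj_on e1 A" "\<And>x. inj_on e2 (B x)"
  shows "gsum \<sigma> e f (Sigma A B) = gsum \<sigma> e1 (\<lambda>x. gsum \<sigma> e2 (\<lambda>y. f (x,y)) (B x)) A"
proof -
  have S: "Sigma A B = (\<Union>x\<in>A. {x} \<times> B x)" by auto
  have "gsum \<sigma> e f (Sigma A B) = gsum \<sigma> e1 (\<lambda>x. gsum \<sigma> e f ({x} \<times> B x)) A"
  proof (unfold S, rule gsum_part)
    show "inj_on e (\<Union>x\<in>A. {x} \<times> B x)" using assms(1) S by metis
    show "inj_on e1 A" by (rule assms(2))
    show "\<And>j k. j \<in> A \<Longrightarrow> k \<in> A \<Longrightarrow> j \<noteq> k \<Longrightarrow> {j} \<times> B j \<inter> {k} \<times> B k = {}" by blast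
  qed
  also have "\<dots> = gsum \<sigma> e1 (\<lambda>x. gsum \<sigma> e2 (\<lambda>y. f (x,y)) (B x)) A"
  proof (rule gsum_cong)
    fix x assume "x \<in> A"
    hence "{x} \<times> B x \<subseteq> Sigma A B" by auto
    hence "inj_on e ((\<lambda>y. (x,y)) ` B x)" using assms(1) by (auto intro: inj_on_subset)
    moreover have E: "(\<lambda>y. (x,y)) ` B x = {x} \<times> B x" by auto
    moreover have "inj_on (\<lambda>y. (x,y)) (B x)" by (simp add: inj_on_def)
    ultimately have "gsum \<sigma> e f ((\<lambda>y. (x,y)) ` B x) = gsum \<sigma> e2 (\<lambda>y. f (x,y)) (B x)"
      by (intro gsum_image assms(3))
    thus "gsum \<sigma> e f ({x} \<times> B x) = gsum \<sigma> e2 (\<lambda>y. f (x,y)) (B x)" by (simp only: E)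
  qed
  finally show ?thesis .
qed

end


lemma inj_on_enc_cnt[simp]: "inj_on enc_cnt A"
  using inj_enc_cnt by (rule inj_on_subset) simp

lemma inj_on_enc_cseq[simp]: "inj_on enc_cseq A"
  using inj_enc_cseq by (rule inj_on_subset) simp

lemma gsum_mult_left: "gsum \<sigma> e (\<lambda>x. c * f x) A = c * gsum \<sigma> e f A"
  if "complete_semiring \<sigma>" for \<sigma> :: "(idx \<Rightarrow> 's::semiring_1) \<Rightarrow> idx set \<Rightarrow> 's"
  using that[unfolded complete_semiring_def, THEN conjunct2, THEN conjunct1, rule_format,
    of c "\<lambda>u. f (inv_into A e u)" "e`A"] unfolding gsum_def by simp

lemma gsum_mult_right: "gsum \<sigma> e (\<lambda>x. f x * c) A = gsum \<sigma> e f A * c"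
  if "complete_semiring \<sigma>" for \<sigma> :: "(idx \<Rightarrow> 's::semiring_1) \<Rightarrow> idx set \<Rightarrow> 's"
  using that[unfolded complete_semiring_def, THEN conjunct2, THEN conjunct2, rule_format,
    of "\<lambda>u. f (inv_into A e u)" c "e`A"] unfolding gsum_def by simp


locale pda =
  fixes \<sigma>S :: "(idx \<Rightarrow> 's::semiring_1) \<Rightarrow> idx set \<Rightarrow> 's"
    and \<sigma>V :: "(idx \<Rightarrow> 'v::comm_monoid_add) \<Rightarrow> idx set \<Rightarrow> 'v"
    and act :: "'s \<Rightarrow> 'v \<Rightarrow> 'v"
    and iprod :: "(nat \<Rightarrow> 's) \<Rightarrow> 'v"
    and n :: nat
    and M :: "'g::finite list \<Rightarrow> 'g list \<Rightarrow> nat \<Rightarrow> nat \<Rightarrow> 's"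
  assumes pair: "complete_ssp \<sigma>S \<sigma>V act iprod"
    and pdm: "pushdown_matrix n M"
begin

lemma csr: "complete_semiring \<sigma>S" using pair unfolding complete_ssp_def by blast
lemma csm: "complete_semimodule \<sigma>S \<sigma>V act" using pair unfolding complete_ssp_def by blast
lemma iprod_step: "iprod s = act (s 0) (iprod (\<lambda>t. s (Suc t)))"
  using pair unfolding complete_ssp_def by blast
lemma act_mult: "act (a * b) v = act a (act b v)"
  using csm unfolding complete_semimodule_def by blast
lemma act_0l[simp]: "act 0 v = 0"
  using csm unfolding complete_semimodule_def by blast
lemma act_0r[simp]: "act a 0 = 0"
  using csm unfolding complete_semimodule_def by blast
lemma act_1[simp]: "act 1 v = v"
  using csm unfolding complete_semimodule_def by blast
lemma act_addr: "act a (v + u) = act a v + act a u"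
  using csm unfolding complete_semimodule_def by blast
lemma act_addl: "act (a + b) v = act a v + act b v"
  using csm unfolding complete_semimodule_def by blast
lemma act_sumV_raw: "act s (\<sigma>V f A) = \<sigma>V (\<lambda>i. act s (f i)) A"
  using csm[unfolded complete_semimodule_def] by blast
lemma act_sumS_raw: "act (\<sigma>S f A) v = \<sigma>V (\<lambda>i. act (f i) v) A"
  using csm[unfolded complete_semimodule_def, THEN conjunct2, THEN conjunct2, THEN conjunct2,
     THEN conjunct2, THEN conjunct2, THEN conjunct2, THEN conjunct2, THEN conjunct2, rule_format, of f A v] .

lemma act_gsumV: "act s (gsum \<sigma>V e f A) = gsum \<sigma>V e (\<lambda>x. act s (f x)) A"
  unfolding gsum_def by (rule act_sumV_raw)
lemma act_gsumS: "act (gsum \<sigma>S e f A) v = gsum \<sigma>V e (\<lambda>x. act (f x) v) A"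
  unfolding gsum_def by (rule act_sumS_raw)

lemma act_sum: "act s (sum f A) = sum (\<lambda>x. act s (f x)) A"
  by (induction A rule: infinite_finite_induct) (auto simp: act_addr)
lemma act_suml: "act (sum f A) v = sum (\<lambda>x. act (f x) v) A"
  by (induction A rule: infinite_finite_induct) (auto simp: act_addl)

sublocale S: cm \<sigma>S
proof
  show "complete_monoid \<sigma>S" using csr unfolding complete_semiring_def by blast
  fix A
  have "\<sigma>S (\<lambda>i. 0 * (0::'s)) A = 0 * \<sigma>S (\<lambda>_. 0) A"
    using csr[unfolded complete_semiring_def, THEN conjunct2, THEN conjunct1, rule_format,
      of 0 "\<lambda>_. 0" A] by simp
  thus "\<sigma>S (\<lambda>_. 0) A = 0" by simp
qed

sublocale V: cm \<sigma>V
proof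
  show "complete_monoid \<sigma>V" using csm unfolding complete_semimodule_def by blast
  fix A
  have "act 0 (\<sigma>V (\<lambda>_. 0) A) = \<sigma>V (\<lambda>i. act 0 0) A" by (rule act_sumV_raw)
  thus "\<sigma>V (\<lambda>_. 0) A = 0" by simp
qed

lemma gsumS_mult_left: "gsum \<sigma>S e (\<lambda>x. c * f x) A = c * gsum \<sigma>S e f A"
  by (rule gsum_mult_left[OF csr])
lemma gsumS_mult_right: "gsum \<sigma>S e (\<lambda>x. f x * c) A = gsum \<sigma>S e f A * c"
  by (rule gsum_mult_right[OF csr])

abbreviation St :: "nat set" where "St \<equiv> {1..n}"

definition w :: "'g list \<times> nat \<Rightarrow> 'g list \<times> nat \<Rightarrow> 's" where
  "w c d = M (fst c) (fst d) (snd c) (snd d)"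

fun fw :: "'g list \<times> nat \<Rightarrow> ('g list \<times> nat) list \<Rightarrow> 's" where
  "fw c [] = 1"
| "fw c (d # ds) = w c d * fw d ds"

definition vstep :: "'g list \<times> nat \<Rightarrow> 'g list \<times> nat \<Rightarrow> bool" where
  "vstep c d \<longleftrightarrow> (\<exists>p \<pi> \<pi>'. fst c = p # \<pi>' \<and> fst d = \<pi> @ \<pi>')"

fun vpath :: "'g list \<times> nat \<Rightarrow> ('g list \<times> nat) list \<Rightarrow> bool" where
  "vpath c [] = True"
| "vpath c (d # ds) = (vstep c d \<and> vpath d ds)"

definition FPm :: "nat \<Rightarrow> 'g list \<times> nat \<Rightarrow> 'g list \<times> nat \<Rightarrow> ('g list \<times> nat) list set" where
  "FPm m c0 c1 = {cs. length cs = m \<and> (\<forall>d\<in>set cs. snd d \<in> St) \<and> last (c0 # cs) = c1}"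

definition FP :: "'g list \<times> nat \<Rightarrow> 'g list \<times> nat \<Rightarrow> ('g list \<times> nat) list set" where
  "FP c0 c1 = {cs. (\<forall>d\<in>set cs. snd d \<in> St) \<and> last (c0 # cs) = c1}"

definition VFP :: "'g list \<times> nat \<Rightarrow> 'g list \<times> nat \<Rightarrow> ('g list \<times> nat) list set" where
  "VFP c0 c1 = {cs \<in> FP c0 c1. vpath c0 cs}"

lemma w_invalid: "snd c \<in> St \<Longrightarrow> snd d \<in> St \<Longrightarrow> \<not> vstep c d \<Longrightarrow> w c d = 0"
  using pdm unfolding pushdown_matrix_def w_def vstep_def by blast

lemma fw_invalid: "snd c \<in> St \<Longrightarrow> \<forall>d\<in>set ds. snd d \<in> St \<Longrightarrow> \<not> vpath c ds \<Longrightarrow> fw c ds = 0"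
  by (induction ds arbitrary: c) (auto simp: w_invalid)

lemma FPm_0: "FPm 0 c0 c1 = (if c0 = c1 then {[]} else {})"
  unfolding FPm_def by auto

lemma FPm_Suc: "FPm (Suc m) c0 c1 = (\<lambda>(c, cs). c # cs) ` Sigma (UNIV \<times> St) (\<lambda>c. FPm m c c1)"
proof (rule set_eqI)
  fix xs
  show "xs \<in> FPm (Suc m) c0 c1 \<longleftrightarrow> xs \<in> (\<lambda>(c, cs). c # cs) ` Sigma (UNIV \<times> St) (\<lambda>c. FPm m c c1)"
  proof
    assume "xs \<in> FPm (Suc m) c0 c1"
    then obtain c cs where "xs = c # cs" unfolding FPm_def by (cases xs) auto
    thus "xs \<in> (\<lambda>(c, cs). c # cs) ` Sigma (UNIV \<times> St) (\<lambda>c. FPm m c c1)"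
      using \<open>xs \<in> FPm (Suc m) c0 c1\<close> unfolding FPm_def
      by (intro image_eqI[of _ _ "(c, cs)"]) (auto simp: mem_Times_iff)
  qed (auto simp: FPm_def mem_Times_iff)
qed

lemma mpow_paths:
  "mpow \<sigma>S n M m \<pi>1 \<pi>2 i j = gsum \<sigma>S enc_cnt (fw (\<pi>1, i)) (FPm m (\<pi>1, i) (\<pi>2, j))"
proof (induction m arbitrary: \<pi>1 i)
  case 0
  show ?case by (simp add: FPm_0 S.gsum_fin)
next
  case (Suc m)
  let ?c0 = "(\<pi>1, i)" and ?c1 = "(\<pi>2, j)"
  have "mpow \<sigma>S n M (Suc m) \<pi>1 \<pi>2 i j =
     gsum \<sigma>S enc_cnt (\<lambda>c. w ?c0 c * gsum \<sigma>S enc_cnt (fw c) (FPm m c ?c1)) (UNIV \<times> St)"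
    by (simp only: mpow.simps, intro S.gsum_cong) (auto simp: Suc w_def)
  also have "\<dots> = gsum \<sigma>S enc_cnt (\<lambda>c. gsum \<sigma>S enc_cnt (\<lambda>cs. w ?c0 c * fw c cs) (FPm m c ?c1)) (UNIV \<times> St)"
    by (simp add: gsumS_mult_left)
  also have "\<dots> = gsum \<sigma>S enc_cnt (\<lambda>(c, cs). w ?c0 c * fw c cs) (Sigma (UNIV \<times> St) (\<lambda>c. FPm m c ?c1))"
    using S.gsum_Sigma[of enc_cnt "UNIV \<times> St" "\<lambda>c. FPm m c ?c1" enc_cnt enc_cnt
       "\<lambda>(c,cs). w ?c0 c * fw c cs"] by simp
  also have "\<dots> = gsum \<sigma>S enc_cnt (fw ?c0) ((\<lambda>(c, cs). c # cs) ` Sigma (UNIV \<times> St) (\<lambda>c. FPm m c ?c1))"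
    by (subst S.gsum_image[where e'=enc_cnt]) (auto intro!: inj_onI simp: case_prod_beta split_beta')
  also have "\<dots> = gsum \<sigma>S enc_cnt (fw ?c0) (FPm (Suc m) ?c0 ?c1)" by (simp add: FPm_Suc)
  finally show ?case .
qed

lemma FP_Un: "FP c0 c1 = (\<Union>m\<in>UNIV. FPm m c0 c1)"
  unfolding FP_def FPm_def by auto

lemma mstar_paths:
  "mstar \<sigma>S n M \<pi>1 \<pi>2 i j = gsum \<sigma>S enc_cnt (fw (\<pi>1, i)) (FP (\<pi>1, i) (\<pi>2, j))"
proof -
  have "mstar \<sigma>S n M \<pi>1 \<pi>2 i j = gsum \<sigma>S enc_cnt (\<lambda>m. gsum \<sigma>S enc_cnt (fw (\<pi>1, i)) (FPm m (\<pi>1, i) (\<pi>2, j))) UNIV"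
    unfolding mstar_def by (simp add: mpow_paths)
  also have "\<dots> = gsum \<sigma>S enc_cnt (fw (\<pi>1, i)) (\<Union>m\<in>UNIV. FPm m (\<pi>1, i) (\<pi>2, j))"
    by (rule S.gsum_part[symmetric]) (auto simp: FPm_def)
  finally show ?thesis by (simp add: FP_Un)
qed

lemma mstar_vpaths:
  assumes "i \<in> St"
  shows "mstar \<sigma>S n M \<pi>1 \<pi>2 i j = gsum \<sigma>S enc_cnt (fw (\<pi>1, i)) (VFP (\<pi>1, i) (\<pi>2, j))"
  unfolding mstar_paths
  by (rule S.gsum_sub) (use assms in \<open>auto simp: VFP_def FP_def intro!: fw_invalid\<close>)

end

lemma prefix_unique:
  assumes "map f xs @ ys = map f xs' @ ys'" "inj f" "xs \<noteq> []" "xs' \<noteq> []"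
    "P (last xs)" "P (last xs')" "\<forall>d\<in>set (butlast xs). \<not> P d" "\<forall>d\<in>set (butlast xs'). \<not> P d"
  shows "xs = xs' \<and> ys = ys'"
  using assms
proof (induction xs arbitrary: xs')
  case Nil then show ?case by simp
next
  case (Cons a as)
  obtain b bs where xs': "xs' = b # bs" using Cons.prems(4) by (cases xs') auto
  have ab: "a = b" using Cons.prems(1,2) xs' by (auto dest: injD)
  show ?case
  proof (cases "as = []")
    case True
    hence "P a" using Cons.prems(5) by simp
    hence "bs = []" using Cons.prems(8) xs' ab by (cases bs) auto
    thus ?thesis using True xs' ab Cons.prems(1) by simp
  next
    case False
    hence "\<not> P a" using Cons.prems(7) by simp
    hence "bs \<noteq> []" using Cons.prems(6) xs' ab by auto
    have "as = bs \<and> ys = ys'"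
      using Cons.IH[of bs] Cons.prems False \<open>bs \<noteq> []\<close> xs' ab by simp
    thus ?thesis using xs' ab by simp
  qed
qed

context pda begin

definition lift :: "'g list \<Rightarrow> 'g list \<times> nat \<Rightarrow> 'g list \<times> nat" where
  "lift r c = (fst c @ r, snd c)"

lemma inj_lift: "inj (lift r)"
  by (rule injI) (auto simp: lift_def prod_eq_iff)

lemma vstep_lift: "fst c \<noteq> [] \<Longrightarrow> vstep (lift r c) (lift r d) \<longleftrightarrow> vstep c d"
  unfolding vstep_def lift_def by (cases "fst c") auto

lemma vstep_lift': "vstep c d \<Longrightarrow> vstep (lift r c) (lift r d)"
  unfolding vstep_def lift_def by auto

lemma w_lift:
  assumes "fst c \<noteq> []" "snd c \<in> St" "snd d \<in> St"
  shows "w (lift r c) (lift r d) = w c d"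
proof (cases "vstep c d")
  case True
  then obtain p \<pi> \<pi>' where e: "fst c = p # \<pi>'" "fst d = \<pi> @ \<pi>'" unfolding vstep_def by blast
  have 1: "M (p # \<pi>' @ r) (\<pi> @ \<pi>' @ r) (snd c) (snd d) = M [p] \<pi> (snd c) (snd d)"
    using pdm assms unfolding pushdown_matrix_def by blast
  have 2: "M (p # \<pi>') (\<pi> @ \<pi>') (snd c) (snd d) = M [p] \<pi> (snd c) (snd d)"
    using pdm assms unfolding pushdown_matrix_def by blast
  show ?thesis unfolding w_def lift_def using e 1 2 by simp
next
  case False
  hence "\<not> vstep (lift r c) (lift r d)" using vstep_lift assms by blast
  hence "w (lift r c) (lift r d) = 0" using assms by (intro w_invalid) (auto simp: lift_def)
  moreover have "w c d = 0" using assms False by (intro w_invalid) auto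
  ultimately show ?thesis by simp
qed

lemma vpath_ne: "vpath c (d # ds) \<Longrightarrow> fst c \<noteq> []"
  by (auto simp: vstep_def)

lemma vpath_lift: "vpath c cs \<Longrightarrow> vpath (lift r c) (map (lift r) cs)"
  by (induction cs arbitrary: c) (auto intro: vstep_lift')

lemma fw_lift: "vpath c cs \<Longrightarrow> snd c \<in> St \<Longrightarrow> \<forall>d\<in>set cs. snd d \<in> St \<Longrightarrow>
    fw (lift r c) (map (lift r) cs) = fw c cs"
proof (induction cs arbitrary: c)
  case (Cons d ds)
  have "fst c \<noteq> []" using Cons.prems(1) by (rule vpath_ne)
  thus ?case using Cons by (simp add: w_lift)
qed simp

lemma fw_append: "fw c (xs @ ys) = fw c xs * fw (last (c # xs)) ys"
  by (induction xs arbitrary: c) (auto simp: mult.assoc)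

lemma vpath_append: "vpath c (xs @ ys) \<longleftrightarrow> vpath c xs \<and> vpath (last (c # xs)) ys"
  by (induction xs arbitrary: c) auto

lemma last_append_cons: "last (c # xs @ ys) = last (last (c # xs) # ys)"
  by (induction xs arbitrary: c) auto

lemma vpath_butlast_ne: "vpath c cs \<Longrightarrow> d \<in> set (butlast cs) \<Longrightarrow> fst d \<noteq> []"
proof (induction cs arbitrary: c)
  case (Cons a as)
  show ?case
  proof (cases "d = a")
    case True
    with Cons.prems have "as \<noteq> []" by auto
    then obtain b bs where "as = b # bs" by (cases as) auto
    thus ?thesis using Cons.prems True by (auto simp: vstep_def)
  next
    case False
    hence "d \<in> set (butlast as)" using Cons.prems(2) by (auto split: if_splits)
    thus ?thesis using Cons.IH[of a] Cons.prems(1) by simp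
  qed
qed simp

lemma decomp_fin:
  assumes "vpath c cs" "fst c = x @ r" "x \<noteq> []"
  shows "(\<forall>d\<in>set cs. \<exists>y. y \<noteq> [] \<and> fst d = y @ r) \<or>
     (\<exists>cs1 cs2. cs = map (lift r) cs1 @ cs2 \<and> cs1 \<noteq> [] \<and> fst (last cs1) = [] \<and> vpath (x, snd c) cs1)"
  using assms
proof (induction cs arbitrary: c x)
  case Nil then show ?case by simp
next
  case (Cons d ds)
  from Cons.prems obtain p \<pi> \<pi>' where st: "fst c = p # \<pi>'" "fst d = \<pi> @ \<pi>'" "vpath d ds"
    by (auto simp: vstep_def)
  obtain x0 where x: "x = p # x0" "\<pi>' = x0 @ r" using st(1) Cons.prems(2,3) by (cases x) auto
  show ?case
  proof (cases "\<pi> @ x0 = []")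
    case True
    have "d # ds = map (lift r) [([], snd d)] @ ds" using st x True by (auto simp: lift_def prod_eq_iff)
    moreover have "vpath (x, snd c) [([], snd d)]" using x True by (auto simp: vstep_def)
    ultimately show ?thesis by (intro disjI2 exI[of _ "[([], snd d)]"] exI[of _ ds]) simp
  next
    case False
    have fd: "fst d = (\<pi> @ x0) @ r" using st x by simp
    from Cons.IH[OF st(3) fd False] show ?thesis
    proof
      assume "\<forall>d\<in>set ds. \<exists>y. y \<noteq> [] \<and> fst d = y @ r"
      thus ?thesis using fd False by auto
    next
      assume "\<exists>cs1 cs2. ds = map (lift r) cs1 @ cs2 \<and> cs1 \<noteq> [] \<and> fst (last cs1) = [] \<and> vpath (\<pi> @ x0, snd d) cs1"
      then obtain cs1 cs2 where h: "ds = map (lift r) cs1 @ cs2" "cs1 \<noteq> []" "fst (last cs1) = []"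
        "vpath (\<pi> @ x0, snd d) cs1" by blast
      have "d # ds = map (lift r) ((\<pi> @ x0, snd d) # cs1) @ cs2" using h fd by (auto simp: lift_def prod_eq_iff)
      moreover have "vpath (x, snd c) ((\<pi> @ x0, snd d) # cs1)" using h x by (auto simp: vstep_def)
      ultimately show ?thesis using h by (intro disjI2 exI[of _ "(\<pi> @ x0, snd d) # cs1"] exI[of _ cs2]) simp
    qed
  qed
qed

end

context pda begin

lemma VFP_elem:
  assumes "cs \<in> VFP c0 (\<pi>, m)" "fst c0 \<noteq> \<pi>"
  shows "cs \<noteq> []" "last cs = (\<pi>, m)" "vpath c0 cs" "\<forall>d\<in>set cs. snd d \<in> St" "m \<in> St"
proof -
  show ne: "cs \<noteq> []" using assms unfolding VFP_def FP_def by auto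
  show "last cs = (\<pi>, m)" using assms ne unfolding VFP_def FP_def by auto
  show "vpath c0 cs" "\<forall>d\<in>set cs. snd d \<in> St" using assms unfolding VFP_def FP_def by auto
  thus "m \<in> St" using \<open>last cs = (\<pi>, m)\<close> ne by (metis last_in_set snd_conv)
qed

lemma last_map_lift: "cs \<noteq> [] \<Longrightarrow> last (c # map (lift r) cs) = lift r (last cs)"
  by (simp add: last_map)

lemma VFP_decomp:
  "VFP (p1 # r, m1) ([], j) =
    (\<Union>x \<in> Sigma St (\<lambda>m2. VFP ([p1], m1) ([], m2)).
        (\<lambda>cs2. map (lift r) (snd x) @ cs2) ` VFP (r, fst x) ([], j))"
  (is "?L = ?R")
proof
  show "?R \<subseteq> ?L"
  proof
    fix cs assume "cs \<in> ?R"
    then obtain m2 cs1 cs2 where h: "m2 \<in> St" "cs1 \<in> VFP ([p1], m1) ([], m2)" "cs2 \<in> VFP (r, m2) ([], j)"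
      "cs = map (lift r) cs1 @ cs2" by auto
    note e = VFP_elem[OF h(2)]
    have l1: "last ((p1 # r, m1) # map (lift r) cs1) = (r, m2)"
      using e by (simp add: last_map lift_def)
    have "vpath (lift r ([p1], m1)) (map (lift r) cs1)" using e by (intro vpath_lift) auto
    hence v1: "vpath (p1 # r, m1) (map (lift r) cs1)" by (simp add: lift_def)
    show "cs \<in> ?L" using h(3) e v1 l1 unfolding h(4) VFP_def FP_def
      by (auto simp: vpath_append last_append_cons lift_def last_append)
  qed
next
  show "?L \<subseteq> ?R"
  proof
    fix cs assume cs: "cs \<in> ?L"
    hence vp: "vpath (p1 # r, m1) cs" and la: "last ((p1 # r, m1) # cs) = ([], j)"
      and stt: "\<forall>d\<in>set cs. snd d \<in> St" unfolding VFP_def FP_def by auto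
    from decomp_fin[OF vp, of "[p1]" r] have
      "(\<forall>d\<in>set cs. \<exists>y. y \<noteq> [] \<and> fst d = y @ r) \<or>
       (\<exists>cs1 cs2. cs = map (lift r) cs1 @ cs2 \<and> cs1 \<noteq> [] \<and> fst (last cs1) = [] \<and> vpath ([p1], m1) cs1)"
      by simp
    thus "cs \<in> ?R"
    proof
      assume a: "\<forall>d\<in>set cs. \<exists>y. y \<noteq> [] \<and> fst d = y @ r"
      have "cs \<noteq> []" using la by auto
      hence "last cs \<in> set cs" by (rule last_in_set)
      moreover have "fst (last cs) = []" using la \<open>cs \<noteq> []\<close> by simp
      ultimately show ?thesis using a by fastforce
    next
      assume "\<exists>cs1 cs2. cs = map (lift r) cs1 @ cs2 \<and> cs1 \<noteq> [] \<and> fst (last cs1) = [] \<and> vpath ([p1], m1) cs1"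
      then obtain cs1 cs2 where h: "cs = map (lift r) cs1 @ cs2" "cs1 \<noteq> []" "fst (last cs1) = []"
        "vpath ([p1], m1) cs1" by blast
      define m2 where "m2 = snd (last cs1)"
      have lc: "last cs1 = ([], m2)" using h(3) m2_def by (simp add: prod_eq_iff)
      have st1: "\<forall>d\<in>set cs1. snd d \<in> St"
      proof
        fix d assume "d \<in> set cs1"
        hence "lift r d \<in> set cs" using h(1) by simp
        thus "snd d \<in> St" using stt by (metis lift_def snd_conv)
      qed
      have m2: "m2 \<in> St" using st1 h(2) m2_def by auto
      have c1: "cs1 \<in> VFP ([p1], m1) ([], m2)" unfolding VFP_def FP_def using st1 h(2,4) lc by simp
      have l1: "last ((p1 # r, m1) # map (lift r) cs1) = (r, m2)"
        using h(2) lc by (simp add: last_map lift_def)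
      have "last ((r, m2) # cs2) = ([], j)" using la l1 unfolding h(1) by (metis last_append_cons)
      moreover have "vpath (r, m2) cs2" using vp l1 unfolding h(1) by (metis vpath_append)
      moreover have "\<forall>d\<in>set cs2. snd d \<in> St" using stt h(1) by simp
      ultimately have c2: "cs2 \<in> VFP (r, m2) ([], j)" unfolding VFP_def FP_def by simp
      show ?thesis using m2 c1 c2 h(1) by (intro UN_I[of "(m2, cs1)"]) auto
    qed
  qed
qed

lemma VFP_decomp_disj:
  assumes "x \<in> Sigma St (\<lambda>m2. VFP ([p1], m1) ([], m2))" "y \<in> Sigma St (\<lambda>m2. VFP ([p1], m1) ([], m2))"
    "x \<noteq> y"
  shows "(\<lambda>cs2. map (lift r) (snd x) @ cs2) ` A \<inter> (\<lambda>cs2. map (lift r) (snd y) @ cs2) ` B = {}"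
proof (rule ccontr)
  assume "\<not> ?thesis"
  then obtain a b where ab: "map (lift r) (snd x) @ a = map (lift r) (snd y) @ b" by auto
  obtain m2 cs1 where x: "x = (m2, cs1)" "cs1 \<in> VFP ([p1], m1) ([], m2)" using assms(1) by auto
  obtain m2' cs1' where y: "y = (m2', cs1')" "cs1' \<in> VFP ([p1], m1) ([], m2')" using assms(2) by auto
  note e = VFP_elem[OF x(2)] and e' = VFP_elem[OF y(2)]
  have "cs1 = cs1'"
    using prefix_unique[of "lift r" cs1 a cs1' b "\<lambda>d. fst d = []"] ab x y e e' inj_lift
      vpath_butlast_ne[of "([p1], m1)" cs1] vpath_butlast_ne[of "([p1], m1)" cs1'] by auto
  thus False using x y e e' assms(3) by simp
qed

lemma mstar_cons:
  assumes "m1 \<in> St"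
  shows "mstar \<sigma>S n M (p1 # r) [] m1 j = (\<Sum>m2\<in>St. mstar \<sigma>S n M [p1] [] m1 m2 * mstar \<sigma>S n M r [] m2 j)"
proof -
  let ?J = "Sigma St (\<lambda>m2. VFP ([p1], m1) ([], m2))"
  let ?Q = "\<lambda>x. (\<lambda>cs2. map (lift r) (snd x) @ cs2) ` VFP (r, fst x) ([], j)"
  have "mstar \<sigma>S n M (p1 # r) [] m1 j = gsum \<sigma>S enc_cnt (fw (p1 # r, m1)) (\<Union>x\<in>?J. ?Q x)"
    using mstar_vpaths[OF assms] VFP_decomp by metis
  also have "\<dots> = gsum \<sigma>S enc_cnt (\<lambda>x. gsum \<sigma>S enc_cnt (fw (p1 # r, m1)) (?Q x)) ?J"
    by (rule S.gsum_part, simp, simp, rule VFP_decomp_disj, assumption+)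
  also have "\<dots> = gsum \<sigma>S enc_cnt (\<lambda>x. fw ([p1], m1) (snd x) * mstar \<sigma>S n M r [] (fst x) j) ?J"
  proof (rule S.gsum_cong)
    fix x assume x: "x \<in> ?J"
    obtain m2 cs1 where xx: "x = (m2, cs1)" "cs1 \<in> VFP ([p1], m1) ([], m2)" using x by auto
    note e = VFP_elem[OF xx(2)]
    have e1: "snd x \<noteq> []" "last (snd x) = ([], fst x)" "vpath ([p1], m1) (snd x)"
      "\<forall>d\<in>set (snd x). snd d \<in> St" "fst x \<in> St" using e unfolding xx(1) by simp_all
    have "gsum \<sigma>S enc_cnt (fw (p1 # r, m1)) (?Q x) =
        gsum \<sigma>S enc_cnt (\<lambda>cs2. fw (p1 # r, m1) (map (lift r) (snd x) @ cs2)) (VFP (r, fst x) ([], j))"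
      by (rule S.gsum_image) (auto intro: inj_onI)
    also have "\<dots> = gsum \<sigma>S enc_cnt (\<lambda>cs2. fw ([p1], m1) (snd x) * fw (r, fst x) cs2) (VFP (r, fst x) ([], j))"
    proof (rule S.gsum_cong)
      fix cs2
      have "fw (p1 # r, m1) (map (lift r) (snd x)) = fw ([p1], m1) (snd x)"
        using fw_lift[of "([p1], m1)" "snd x" r] e1 assms by (simp add: lift_def)
      moreover have "last ((p1 # r, m1) # map (lift r) (snd x)) = (r, fst x)"
        using e1 by (simp add: last_map lift_def)
      ultimately show "fw (p1 # r, m1) (map (lift r) (snd x) @ cs2) = fw ([p1], m1) (snd x) * fw (r, fst x) cs2"
        by (simp add: fw_append)
    qed
    also have "\<dots> = fw ([p1], m1) (snd x) * mstar \<sigma>S n M r [] (fst x) j"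
      by (simp add: gsumS_mult_left mstar_vpaths[OF e1(5)])
    finally show "gsum \<sigma>S enc_cnt (fw (p1 # r, m1)) (?Q x) = fw ([p1], m1) (snd x) * mstar \<sigma>S n M r [] (fst x) j" .
  qed
  also have "\<dots> = gsum \<sigma>S enc_cnt (\<lambda>m2. gsum \<sigma>S enc_cnt (\<lambda>cs1. fw ([p1], m1) cs1 * mstar \<sigma>S n M r [] m2 j)
         (VFP ([p1], m1) ([], m2))) St"
    using S.gsum_Sigma[of enc_cnt St "\<lambda>m2. VFP ([p1], m1) ([], m2)" enc_cnt enc_cnt
       "\<lambda>x. fw ([p1], m1) (snd x) * mstar \<sigma>S n M r [] (fst x) j"] by simp
  also have "\<dots> = gsum \<sigma>S enc_cnt (\<lambda>m2. mstar \<sigma>S n M [p1] [] m1 m2 * mstar \<sigma>S n M r [] m2 j) St"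
    by (simp add: gsumS_mult_right mstar_vpaths[OF assms])
  also have "\<dots> = (\<Sum>m2\<in>St. mstar \<sigma>S n M [p1] [] m1 m2 * mstar \<sigma>S n M r [] m2 j)"
    by (simp add: S.gsum_fin)
  finally show ?thesis .
qed

lemma mstar_nil:
  assumes "m \<in> St"
  shows "mstar \<sigma>S n M [] [] m j = (if m = j then 1 else 0)"
proof -
  have "VFP ([], m) ([], j) = (if m = j then {[]} else {})"
  proof -
    have "cs = []" if "vpath ([], m) cs" for cs
      using that by (cases cs) (auto simp: vstep_def)
    thus ?thesis unfolding VFP_def FP_def by auto
  qed
  thus ?thesis using mstar_vpaths[OF assms] by (simp add: S.gsum_fin)
qed

end

lemma inf_shift1: "infinite {t. P (Suc t)} \<longleftrightarrow> infinite {t::nat. P t}"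
proof -
  have e1: "{t. P t} \<subseteq> insert 0 (Suc ` {t. P (Suc t)})"
  proof
    fix t assume "t \<in> {t. P t}" thus "t \<in> insert 0 (Suc ` {t. P (Suc t)})" by (cases t) auto
  qed
  have e2: "Suc ` {t. P (Suc t)} \<subseteq> {t. P t}" by auto
  have f: "finite (Suc ` {t. P (Suc t)}) \<longleftrightarrow> finite {t. P (Suc t)}"
    by (rule finite_image_iff) simp
  show ?thesis using e1 e2 f finite_subset by (metis finite_insert)
qed

lemma inf_shift: "infinite {t. P (t + k)} \<longleftrightarrow> infinite {t::nat. P t}"
proof (induction k arbitrary: P)
  case (Suc k)
  have "infinite {t. P (t + Suc k)} \<longleftrightarrow> infinite {t. (\<lambda>u. P (Suc u)) (t + k)}" by simp
  also have "\<dots> \<longleftrightarrow> infinite {t. P (Suc t)}" by (rule Suc.IH)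
  also have "\<dots> \<longleftrightarrow> infinite {t. P t}" by (rule inf_shift1)
  finally show ?case .
qed simp

definition cseq :: "'a \<Rightarrow> (nat \<Rightarrow> 'a) \<Rightarrow> nat \<Rightarrow> 'a" where
  "cseq x q t = (case t of 0 \<Rightarrow> x | Suc u \<Rightarrow> q u)"

lemma cseq_0[simp]: "cseq x q 0 = x" and cseq_Suc[simp]: "cseq x q (Suc t) = q t"
  by (simp_all add: cseq_def)

lemma cseq_eqD: "cseq c a = cseq d b \<Longrightarrow> c = d"
  by (metis cseq_0)

lemma all_nat: "(\<forall>t. P t) \<longleftrightarrow> P 0 \<and> (\<forall>u. P (Suc u))"
  by (metis not0_implies_Suc)

lemma inj_cseq: "inj (cseq x)"
proof (rule injI)
  fix a b assume "cseq x a = cseq x b"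
  hence "\<And>t. cseq x a (Suc t) = cseq x b (Suc t)" by simp
  thus "a = b" by auto
qed

definition appL :: "'a list \<Rightarrow> (nat \<Rightarrow> 'a) \<Rightarrow> nat \<Rightarrow> 'a" where
  "appL xs q t = (if t < length xs then xs ! t else q (t - length xs))"

lemma appL_Nil[simp]: "appL [] q = q"
  by (simp add: appL_def fun_eq_iff)

lemma appL_Cons: "appL (x # xs) q = cseq x (appL xs q)"
  by (auto simp: appL_def fun_eq_iff cseq_def nth_Cons split: nat.split)

lemma inj_appL: "inj (appL xs)"
  by (induction xs) (auto simp: appL_Cons inj_def dest: injD[OF inj_cseq])

lemma appL_prefix: "map (appL xs q) [0..<length xs + k] = xs @ map q [0..<k]"
  by (induction xs arbitrary: q) (auto simp: appL_Cons map_upt_Suc simp del: upt_Suc)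

lemma inf_cseq: "infinite {t. P (cseq x q t)} \<longleftrightarrow> infinite {t. P (q t)}"
  using inf_shift1[of "\<lambda>t. P (cseq x q t)"] by simp

context pda begin

definition Qset :: "nat \<Rightarrow> (nat \<Rightarrow> 'g list \<times> nat) set" where
  "Qset l = {q. (\<forall>t. snd (q t) \<in> St) \<and> infinite {t. snd (q t) \<le> l}}"

definition prevq :: "'g list \<times> nat \<Rightarrow> (nat \<Rightarrow> 'g list \<times> nat) \<Rightarrow> nat \<Rightarrow> 'g list \<times> nat" where
  "prevq c q t = prev_cfg (fst c) (snd c) q t"

lemma prevq_0[simp]: "prevq c q 0 = c" and prevq_Suc[simp]: "prevq c q (Suc t) = q t"
  by (simp_all add: prevq_def prev_cfg_def)

lemma prevq_cseq: "prevq c q = cseq c q"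
  by (auto simp: fun_eq_iff prevq_def prev_cfg_def cseq_def split: nat.split)

definition wseq :: "'g list \<times> nat \<Rightarrow> (nat \<Rightarrow> 'g list \<times> nat) \<Rightarrow> nat \<Rightarrow> 's" where
  "wseq c q t = w (prevq c q t) (q t)"

definition vinf :: "'g list \<times> nat \<Rightarrow> (nat \<Rightarrow> 'g list \<times> nat) \<Rightarrow> bool" where
  "vinf c q \<longleftrightarrow> (\<forall>t. vstep (prevq c q t) (q t))"

definition VQ :: "nat \<Rightarrow> 'g list \<times> nat \<Rightarrow> (nat \<Rightarrow> 'g list \<times> nat) set" where
  "VQ l c = {q \<in> Qset l. vinf c q}"

lemma momega_eq: "momega \<sigma>V iprod n l M \<pi> i = gsum \<sigma>V enc_cseq (\<lambda>q. iprod (wseq (\<pi>, i) q)) (Qset l)"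
  unfolding momega_def wseq_def w_def prevq_def Qset_def by simp

lemma iprod_zero: "s t = 0 \<Longrightarrow> iprod s = 0"
proof (induction t arbitrary: s)
  case 0 thus ?case by (subst iprod_step) simp
next
  case (Suc t)
  have "iprod (\<lambda>u. s (Suc u)) = 0" using Suc by simp
  thus ?case by (subst iprod_step) simp
qed

lemma wseq_cseq: "wseq c (cseq x q) 0 = w c x" "wseq c (cseq x q) (Suc t) = wseq x q t"
  by (simp_all add: wseq_def prevq_cseq)

lemma iprod_cseq: "iprod (wseq c (cseq x q)) = act (w c x) (iprod (wseq x q))"
  by (subst iprod_step) (simp add: wseq_cseq)

lemma iprod_appL: "iprod (wseq c (appL xs q)) = act (fw c xs) (iprod (wseq (last (c # xs)) q))"
  by (induction xs arbitrary: c) (auto simp: appL_Cons iprod_cseq act_mult)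

lemma vinf_cseq: "vinf c (cseq x q) \<longleftrightarrow> vstep c x \<and> vinf x q"
proof -
  have "vinf c (cseq x q) \<longleftrightarrow> (\<forall>t. vstep (cseq c (cseq x q) t) (cseq x q t))"
    unfolding vinf_def prevq_cseq ..
  also have "\<dots> \<longleftrightarrow> vstep c x \<and> (\<forall>u. vstep (cseq x q u) (q u))"
    by (subst all_nat) simp
  also have "\<dots> \<longleftrightarrow> vstep c x \<and> vinf x q" unfolding vinf_def prevq_cseq ..
  finally show ?thesis .
qed

lemma vinf_appL: "vinf c (appL xs q) \<longleftrightarrow> vpath c xs \<and> vinf (last (c # xs)) q"
  by (induction xs arbitrary: c) (auto simp: appL_Cons vinf_cseq)

lemma Qset_cseq: "cseq x q \<in> Qset l \<longleftrightarrow> snd x \<in> St \<and> q \<in> Qset l"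
proof -
  have "(\<forall>t. snd (cseq x q t) \<in> St) \<longleftrightarrow> snd x \<in> St \<and> (\<forall>t. snd (q t) \<in> St)"
    by (metis cseq_0 cseq_Suc not0_implies_Suc)
  thus ?thesis unfolding Qset_def using inf_cseq[of "\<lambda>c. snd c \<le> l" x q] by auto
qed

lemma Qset_appL: "appL xs q \<in> Qset l \<longleftrightarrow> (\<forall>d\<in>set xs. snd d \<in> St) \<and> q \<in> Qset l"
  by (induction xs) (auto simp: appL_Cons Qset_cseq)

lemma momega_vpaths:
  assumes "i \<in> St"
  shows "momega \<sigma>V iprod n l M \<pi> i = gsum \<sigma>V enc_cseq (\<lambda>q. iprod (wseq (\<pi>, i) q)) (VQ l (\<pi>, i))"
  unfolding momega_eq
proof (rule V.gsum_sub)
  show "VQ l (\<pi>, i) \<subseteq> Qset l" unfolding VQ_def by auto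
  fix q assume q: "q \<in> Qset l - VQ l (\<pi>, i)"
  then obtain t where t: "\<not> vstep (prevq (\<pi>, i) q t) (q t)" unfolding VQ_def vinf_def by auto
  have "snd (prevq (\<pi>, i) q t) \<in> St" using q assms by (cases t) (auto simp: Qset_def)
  moreover have "snd (q t) \<in> St" using q by (auto simp: Qset_def)
  ultimately have "wseq (\<pi>, i) q t = 0" unfolding wseq_def using t by (intro w_invalid)
  thus "iprod (wseq (\<pi>, i) q) = 0" by (rule iprod_zero)
qed simp

lemma momega_nil:
  assumes "m \<in> St"
  shows "momega \<sigma>V iprod n l M [] m = 0"
proof -
  have "VQ l ([], m) = {}"
  proof -
    have False if "vinf ([], m) q" for q
    proof -
      have "vstep ([], m) (q 0)" using that unfolding vinf_def by (metis prevq_0)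
      thus False by (simp add: vstep_def)
    qed
    thus ?thesis unfolding VQ_def by auto
  qed
  thus ?thesis using momega_vpaths[OF assms] by (simp add: gsum_def V.fin)
qed

lemma momega_first:
  "momega \<sigma>V iprod n l M \<pi> i =
     gsum \<sigma>V enc_cnt (\<lambda>c. act (M \<pi> (fst c) i (snd c)) (momega \<sigma>V iprod n l M (fst c) (snd c))) (UNIV \<times> St)"
proof -
  have U: "Qset l = (\<Union>c\<in>UNIV \<times> St. cseq c ` Qset l)"
  proof
    show "Qset l \<subseteq> (\<Union>c\<in>UNIV \<times> St. cseq c ` Qset l)"
    proof
      fix q assume q: "q \<in> Qset l"
      have "q = cseq (q 0) (\<lambda>t. q (Suc t))" by (auto simp: fun_eq_iff cseq_def split: nat.split)
      moreover have "(\<lambda>t. q (Suc t)) \<in> Qset l" "snd (q 0) \<in> St" using q calculation Qset_cseq by metis+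
      ultimately show "q \<in> (\<Union>c\<in>UNIV \<times> St. cseq c ` Qset l)"
        by (intro UN_I[of "q 0"]) (auto simp: mem_Times_iff)
    qed
  qed (auto simp: Qset_cseq mem_Times_iff)
  have "momega \<sigma>V iprod n l M \<pi> i = gsum \<sigma>V enc_cseq (\<lambda>q. iprod (wseq (\<pi>, i) q)) (\<Union>c\<in>UNIV \<times> St. cseq c ` Qset l)"
    unfolding momega_eq using U by simp
  also have "\<dots> = gsum \<sigma>V enc_cnt (\<lambda>c. gsum \<sigma>V enc_cseq (\<lambda>q. iprod (wseq (\<pi>, i) q)) (cseq c ` Qset l)) (UNIV \<times> St)"
    by (rule V.gsum_part) (auto dest: cseq_eqD)
  also have "\<dots> = gsum \<sigma>V enc_cnt (\<lambda>c. act (M \<pi> (fst c) i (snd c)) (momega \<sigma>V iprod n l M (fst c) (snd c))) (UNIV \<times> St)"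
  proof (rule V.gsum_cong)
    fix c :: "'g list \<times> nat"
    have "gsum \<sigma>V enc_cseq (\<lambda>q. iprod (wseq (\<pi>, i) q)) (cseq c ` Qset l) =
        gsum \<sigma>V enc_cseq (\<lambda>q. iprod (wseq (\<pi>, i) (cseq c q))) (Qset l)"
      by (rule V.gsum_image) (auto intro: inj_on_subset[OF inj_cseq])
    also have "\<dots> = gsum \<sigma>V enc_cseq (\<lambda>q. act (w (\<pi>, i) c) (iprod (wseq c q))) (Qset l)"
      by (simp add: iprod_cseq)
    also have "\<dots> = act (M \<pi> (fst c) i (snd c)) (momega \<sigma>V iprod n l M (fst c) (snd c))"
      by (simp add: act_gsumV momega_eq w_def)
    finally show "gsum \<sigma>V enc_cseq (\<lambda>q. iprod (wseq (\<pi>, i) q)) (cseq c ` Qset l) =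
        act (M \<pi> (fst c) i (snd c)) (momega \<sigma>V iprod n l M (fst c) (snd c))" .
  qed
  finally show ?thesis .
qed

end

context pda begin

definition unl :: "'g list \<Rightarrow> 'g list \<times> nat \<Rightarrow> 'g list \<times> nat" where
  "unl r c = (take (length (fst c) - length r) (fst c), snd c)"

lemma lift_unl: "fst c = y @ r \<Longrightarrow> lift r (unl r c) = c"
  by (simp add: lift_def unl_def prod_eq_iff)

lemma fst_unl: "fst c = y @ r \<Longrightarrow> fst (unl r c) = y"
  by (simp add: unl_def)

lemma step_suffix: "vstep c d \<Longrightarrow> fst c = x @ r \<Longrightarrow> x \<noteq> [] \<Longrightarrow> \<exists>y. fst d = y @ r"
  unfolding vstep_def by (cases x) auto

lemma vinf_step: "vinf c q \<Longrightarrow> vstep (prevq c q t) (q t)"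
  unfolding vinf_def by blast

lemma G_inf:
  assumes "vinf c0 q" "fst c0 = x @ r" "x \<noteq> []" "\<forall>t'\<le>t. fst (q t') \<noteq> r"
  shows "\<exists>y. y \<noteq> [] \<and> fst (q t) = y @ r"
  using assms(4)
proof (induction t)
  case 0
  have "vstep c0 (q 0)" using vinf_step[OF assms(1), of 0] by simp
  then obtain y where "fst (q 0) = y @ r" using step_suffix assms(2,3) by blast
  thus ?case using 0 by (intro exI[of _ y]) auto
next
  case (Suc t)
  obtain y where y: "y \<noteq> []" "fst (q t) = y @ r" using Suc by auto
  have "vstep (q t) (q (Suc t))" using vinf_step[OF assms(1), of "Suc t"] by simp
  then obtain y' where "fst (q (Suc t)) = y' @ r" using step_suffix y by blast
  thus ?case using Suc.prems by (intro exI[of _ y']) auto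
qed

lemma prevq_lift: "prevq (lift r c) (lift r \<circ> q) t = lift r (prevq c q t)"
  by (cases t) auto

lemma vinf_lift: "vinf c q \<Longrightarrow> vinf (lift r c) (lift r \<circ> q)"
  unfolding vinf_def prevq_lift by (auto intro: vstep_lift')

lemma vinf_ne: "vinf c q \<Longrightarrow> fst (q t) \<noteq> []"
  using vinf_step[of c q "Suc t"] by (auto simp: vstep_def)

lemma vinf_unlift:
  assumes "fst c \<noteq> []" "\<forall>t. fst (q t) \<noteq> []" "vinf (lift r c) (lift r \<circ> q)"
  shows "vinf c q"
  unfolding vinf_def
proof
  fix t
  have "fst (prevq c q t) \<noteq> []" using assms by (cases t) auto
  moreover have "vstep (lift r (prevq c q t)) (lift r (q t))"
    using vinf_step[OF assms(3), of t] prevq_lift by simp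
  ultimately show "vstep (prevq c q t) (q t)" using vstep_lift by blast
qed

lemma vpath_unlift:
  "fst c \<noteq> [] \<Longrightarrow> \<forall>d\<in>set (butlast cs). fst d \<noteq> [] \<Longrightarrow> vpath (lift r c) (map (lift r) cs) \<Longrightarrow> vpath c cs"
proof (induction cs arbitrary: c)
  case (Cons d ds)
  have "vstep c d" using Cons.prems vstep_lift by auto
  moreover have "vpath d ds"
  proof (cases "ds = []")
    case False
    hence "fst d \<noteq> []" using Cons.prems(2) by simp
    thus ?thesis using Cons False by simp
  qed simp
  ultimately show ?case by simp
qed simp

lemma Qset_lift: "lift r \<circ> q \<in> Qset l \<longleftrightarrow> q \<in> Qset l"
  by (simp add: Qset_def lift_def)

lemma inj_liftq: "inj (\<lambda>q. lift r \<circ> q)"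
proof (rule injI)
  fix a b assume "lift r \<circ> a = lift r \<circ> b"
  hence "\<And>t. lift r (a t) = lift r (b t)" by (metis comp_apply)
  thus "a = b" using inj_lift by (auto simp: fun_eq_iff dest: injD)
qed

end

context pda begin

abbreviation JJ :: "'g \<Rightarrow> nat \<Rightarrow> (nat \<times> ('g list \<times> nat) list) set" where
  "JJ p1 m1 \<equiv> Sigma St (\<lambda>m2. VFP ([p1], m1) ([], m2))"

abbreviation BB :: "nat \<Rightarrow> 'g list \<Rightarrow> nat \<times> ('g list \<times> nat) list \<Rightarrow> (nat \<Rightarrow> 'g list \<times> nat) set" where
  "BB l r x \<equiv> appL (map (lift r) (snd x)) ` VQ l (r, fst x)"

lemma VQ_decomp:
  "VQ l (p1 # r, m1) = (\<lambda>q. lift r \<circ> q) ` VQ l ([p1], m1) \<union> (\<Union>x\<in>JJ p1 m1. BB l r x)"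
  (is "?L = ?A \<union> ?B")
proof
  have c0: "(p1 # r, m1) = lift r ([p1], m1)" by (simp add: lift_def)
  show "?A \<union> ?B \<subseteq> ?L"
  proof
    fix q assume "q \<in> ?A \<union> ?B"
    thus "q \<in> ?L"
    proof
      assume "q \<in> ?A"
      then obtain q' where q': "q' \<in> VQ l ([p1], m1)" "q = lift r \<circ> q'" by auto
      have "lift r \<circ> q' \<in> Qset l" using q'(1) Qset_lift unfolding VQ_def by blast
      moreover have "vinf (p1 # r, m1) (lift r \<circ> q')"
        using vinf_lift[of "([p1], m1)" q' r] q'(1) c0 unfolding VQ_def by simp
      ultimately show ?thesis using q'(2) unfolding VQ_def by simp
    next
      assume "q \<in> ?B"
      then obtain m2 cs1 q' where h: "m2 \<in> St" "cs1 \<in> VFP ([p1], m1) ([], m2)" "q' \<in> VQ l (r, m2)"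
        "q = appL (map (lift r) cs1) q'" by auto
      note e = VFP_elem[OF h(2)]
      have l1: "last ((p1 # r, m1) # map (lift r) cs1) = (r, m2)"
        using e by (simp add: last_map lift_def)
      have "vpath (lift r ([p1], m1)) (map (lift r) cs1)" using e by (intro vpath_lift) auto
      hence v1: "vpath (p1 # r, m1) (map (lift r) cs1)" by (simp add: lift_def)
      show ?thesis using h(3) e v1 l1 unfolding h(4) VQ_def
        by (simp add: vinf_appL Qset_appL lift_def)
    qed
  qed
next
  show "?L \<subseteq> ?A \<union> ?B"
  proof
    have c0: "(p1 # r, m1) = lift r ([p1], m1)" by (simp add: lift_def)
    fix q assume q: "q \<in> ?L"
    hence qQ: "q \<in> Qset l" and vq: "vinf (p1 # r, m1) q" unfolding VQ_def by auto
    show "q \<in> ?A \<union> ?B"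
    proof (cases "\<exists>t. fst (q t) = r")
      case False
      have ys: "\<forall>t. \<exists>y. y \<noteq> [] \<and> fst (q t) = y @ r"
        using G_inf[OF vq, of "[p1]" r] False by auto
      define q' where "q' = unl r \<circ> q"
      have qe: "q = lift r \<circ> q'"
      proof
        fix t obtain y where "fst (q t) = y @ r" using ys by blast
        thus "q t = (lift r \<circ> q') t" unfolding q'_def using lift_unl by simp
      qed
      have ne: "\<forall>t. fst (q' t) \<noteq> []" unfolding q'_def using ys fst_unl by fastforce
      have "q' \<in> Qset l" using qQ[unfolded qe] Qset_lift by blast
      moreover have "vinf ([p1], m1) q'"
        by (rule vinf_unlift[of _ q' r]) (use vq[unfolded qe c0] ne in simp_all)
      ultimately have "q' \<in> VQ l ([p1], m1)" unfolding VQ_def by simp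
      thus ?thesis unfolding qe by (rule UnI1[OF imageI])
    next
      case True
      define T where "T = (LEAST t. fst (q t) = r)"
      have qT: "fst (q T) = r" using LeastI_ex[OF True] unfolding T_def .
      have bef: "\<forall>t'\<le>t. fst (q t') \<noteq> r" if "t < T" for t
      proof (intro allI impI)
        fix t' assume "t' \<le> t"
        hence "t' < T" using that by simp
        thus "fst (q t') \<noteq> r" unfolding T_def by (rule not_less_Least)
      qed
      have ys: "\<exists>y. y \<noteq> [] \<and> fst (q t) = y @ r" if "t < T" for t
        using G_inf[OF vq, of "[p1]" r t] bef[OF that] by simp
      have ys': "\<exists>y. fst (q t) = y @ r" if tT: "t \<le> T" for t
      proof (cases "t = T")
        case True thus ?thesis using qT by (intro exI[of _ "[]"]) simp
      next
        case False
        then obtain y where "fst (q t) = y @ r" using ys[of t] tT by fastforce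
        thus ?thesis by blast
      qed
      define cs1 where "cs1 = map (unl r \<circ> q) [0..<Suc T]"
      define q'' where "q'' = (\<lambda>t. q (t + Suc T))"
      define m2 where "m2 = snd (q T)"
      have len: "length cs1 = Suc T" unfolding cs1_def by simp
      have qe: "q = appL (map (lift r) cs1) q''"
      proof
        fix t show "q t = appL (map (lift r) cs1) q'' t"
        proof (cases "t < Suc T")
          case True
          hence "appL (map (lift r) cs1) q'' t = lift r (unl r (q t))"
            unfolding appL_def cs1_def by (simp del: upt_Suc)
          thus ?thesis using ys'[of t] True lift_unl by fastforce
        next
          case False
          thus ?thesis by (simp add: appL_def q''_def len)
        qed
      qed
      have lc: "last cs1 = ([], m2)" unfolding cs1_def m2_def using qT
        by (simp add: unl_def)
      have ne1: "cs1 \<noteq> []" using len by auto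
      have q1: "(\<forall>d\<in>set (map (lift r) cs1). snd d \<in> St) \<and> q'' \<in> Qset l"
        using qQ Qset_appL[of "map (lift r) cs1" q'' l] qe by simp
      have v1: "vpath (p1 # r, m1) (map (lift r) cs1) \<and> vinf (last ((p1 # r, m1) # map (lift r) cs1)) q''"
        using vq vinf_appL[of "(p1 # r, m1)" "map (lift r) cs1" q''] qe by simp
      have l1: "last ((p1 # r, m1) # map (lift r) cs1) = (r, m2)"
        using ne1 lc by (simp add: last_map lift_def)
      have bl: "\<forall>d\<in>set (butlast cs1). fst d \<noteq> []"
      proof
        fix d assume "d \<in> set (butlast cs1)"
        hence "d \<in> set (map (unl r \<circ> q) [0..<T])" unfolding cs1_def by (simp add: map_butlast[symmetric])
        then obtain t where t: "t < T" "d = unl r (q t)" by auto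
        thus "fst d \<noteq> []" using ys[OF t(1)] fst_unl by fastforce
      qed
      have vp1: "vpath ([p1], m1) cs1"
        by (rule vpath_unlift[of _ _ r]) (use v1[unfolded c0] bl in simp_all)
      have st1: "\<forall>d\<in>set cs1. snd d \<in> St" using q1 by (auto simp: lift_def)
      have m2: "m2 \<in> St" using qQ unfolding m2_def Qset_def by auto
      have c1: "cs1 \<in> VFP ([p1], m1) ([], m2)" unfolding VFP_def FP_def using st1 vp1 lc ne1 by simp
      have q''V: "q'' \<in> VQ l (r, m2)" unfolding VQ_def using q1 v1 l1 by simp
      have "q \<in> BB l r (m2, cs1)" unfolding qe snd_conv fst_conv by (rule imageI[OF q''V])
      hence "q \<in> ?B" using m2 c1 by (intro UN_I[of "(m2, cs1)"]) simp_all
      thus ?thesis by (rule UnI2)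
    qed
  qed
qed

end

context pda begin

lemma appL_nth: "t < length xs \<Longrightarrow> appL xs q t = xs ! t"
  by (simp add: appL_def)

lemma VQ_disj1:
  assumes "x \<in> JJ p1 m1"
  shows "(\<lambda>q. lift r \<circ> q) ` VQ l ([p1], m1) \<inter> BB l r x = {}"
proof (rule equals0I)
  fix f assume f: "f \<in> (\<lambda>q. lift r \<circ> q) ` VQ l ([p1], m1) \<inter> BB l r x"
  obtain m2 cs1 where x: "x = (m2, cs1)" "cs1 \<in> VFP ([p1], m1) ([], m2)" using assms by auto
  from f obtain q' where h1: "q' \<in> VQ l ([p1], m1)" "f = lift r \<circ> q'" by blast
  from f obtain q'' where h2: "f = appL (map (lift r) cs1) q''" unfolding x by auto
  note e = VFP_elem[OF x(2)]
  define t where "t = length cs1 - 1"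
  have tl: "t < length cs1" using e unfolding t_def by simp
  have "f t = lift r (last cs1)"
    using tl e unfolding t_def h2 by (simp add: appL_nth last_conv_nth)
  moreover have "f t = lift r (q' t)" unfolding h1(2) by simp
  ultimately have "lift r (q' t) = lift r ([], m2)" using e(2) by simp
  hence "fst (q' t) = []" by (simp add: lift_def)
  moreover have "vinf ([p1], m1) q'" using h1(1) unfolding VQ_def by simp
  ultimately show False using vinf_ne by blast
qed

lemma VQ_disj2:
  assumes "x \<in> JJ p1 m1" "y \<in> JJ p1 m1" "x \<noteq> y"
  shows "BB l r x \<inter> BB l r y = {}"
proof (rule equals0I)
  fix f assume f: "f \<in> BB l r x \<inter> BB l r y"
  obtain m2 cs1 where x: "x = (m2, cs1)" "cs1 \<in> VFP ([p1], m1) ([], m2)" using assms(1) by auto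
  obtain m2' cs1' where y: "y = (m2', cs1')" "cs1' \<in> VFP ([p1], m1) ([], m2')" using assms(2) by auto
  from f obtain a where a: "f = appL (map (lift r) cs1) a" unfolding x by auto
  from f obtain b where b: "f = appL (map (lift r) cs1') b" unfolding y by auto
  note e = VFP_elem[OF x(2), simplified] and e' = VFP_elem[OF y(2), simplified]
  let ?xs = "map (lift r) cs1" and ?ys = "map (lift r) cs1'"
  have "map (appL ?xs a) [0..<length ?xs + length ?ys] = map (appL ?ys b) [0..<length ?ys + length ?xs]"
    using a b by (simp add: add.commute)
  hence P: "?xs @ map a [0..<length ?ys] = ?ys @ map b [0..<length ?xs]" by (simp only: appL_prefix)
  have bl: "\<forall>d\<in>set (butlast cs1). \<not> fst d = []"
    using vpath_butlast_ne[of "([p1], m1)" cs1] e(3) by blast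
  have bl': "\<forall>d\<in>set (butlast cs1'). \<not> fst d = []"
    using vpath_butlast_ne[of "([p1], m1)" cs1'] e'(3) by blast
  have "cs1 = cs1' \<and> map a [0..<length ?ys] = map b [0..<length ?xs]"
    by (rule prefix_unique[OF P inj_lift e(1) e'(1), where P="\<lambda>d. fst d = []"]) (simp_all add: e(2) e'(2) bl bl')
  hence "cs1 = cs1'" by blast
  thus False using x y e(2) e'(2) assms(3) by simp
qed

lemma wseq_lift:
  assumes "q \<in> VQ l c" "snd c \<in> St"
  shows "wseq (lift r c) (lift r \<circ> q) = wseq c q"
proof
  fix t
  have v: "vinf c q" and Q: "q \<in> Qset l" using assms unfolding VQ_def by auto
  have "fst (prevq c q t) \<noteq> []" using vinf_step[OF v, of t] by (auto simp: vstep_def)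
  moreover have "snd (prevq c q t) \<in> St" using Q assms(2) by (cases t) (auto simp: Qset_def)
  moreover have "snd (q t) \<in> St" using Q by (auto simp: Qset_def)
  ultimately show "wseq (lift r c) (lift r \<circ> q) t = wseq c q t"
    unfolding wseq_def prevq_lift by (simp add: w_lift)
qed

lemma momega_cons:
  assumes "m1 \<in> St"
  shows "momega \<sigma>V iprod n l M (p1 # r) m1 = momega \<sigma>V iprod n l M [p1] m1 +
     (\<Sum>m2\<in>St. act (mstar \<sigma>S n M [p1] [] m1 m2) (momega \<sigma>V iprod n l M r m2))"
proof -
  let ?c0 = "(p1 # r, m1)"
  let ?F = "\<lambda>q. iprod (wseq ?c0 q)"
  let ?A = "(\<lambda>q. lift r \<circ> q) ` VQ l ([p1], m1)"
  have c0: "?c0 = lift r ([p1], m1)" by (simp add: lift_def)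
  have "momega \<sigma>V iprod n l M (p1 # r) m1 = gsum \<sigma>V enc_cseq ?F (?A \<union> (\<Union>x\<in>JJ p1 m1. BB l r x))"
    using momega_vpaths[OF assms] VQ_decomp by metis
  also have "\<dots> = gsum \<sigma>V enc_cseq ?F ?A + gsum \<sigma>V enc_cseq ?F (\<Union>x\<in>JJ p1 m1. BB l r x)"
  proof (rule V.gsum_Un)
    show "?A \<inter> (\<Union>x\<in>JJ p1 m1. BB l r x) = {}" using VQ_disj1 by blast
  qed simp
  also have "gsum \<sigma>V enc_cseq ?F ?A = momega \<sigma>V iprod n l M [p1] m1"
  proof -
    have "gsum \<sigma>V enc_cseq ?F ?A = gsum \<sigma>V enc_cseq (\<lambda>q. ?F (lift r \<circ> q)) (VQ l ([p1], m1))"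
      by (rule V.gsum_image) (auto intro: inj_on_subset[OF inj_liftq])
    also have "\<dots> = gsum \<sigma>V enc_cseq (\<lambda>q. iprod (wseq ([p1], m1) q)) (VQ l ([p1], m1))"
    proof (rule V.gsum_cong)
      fix q assume "q \<in> VQ l ([p1], m1)"
      thus "?F (lift r \<circ> q) = iprod (wseq ([p1], m1) q)"
        unfolding c0 using wseq_lift[of q l "([p1], m1)" r] assms by simp
    qed
    finally show ?thesis using momega_vpaths[OF assms] by simp
  qed
  also have "gsum \<sigma>V enc_cseq ?F (\<Union>x\<in>JJ p1 m1. BB l r x) =
      gsum \<sigma>V enc_cnt (\<lambda>x. gsum \<sigma>V enc_cseq ?F (BB l r x)) (JJ p1 m1)"
    by (rule V.gsum_part, simp, simp, rule VQ_disj2, assumption+)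
  also have "\<dots> = gsum \<sigma>V enc_cnt (\<lambda>x. act (fw ([p1], m1) (snd x)) (momega \<sigma>V iprod n l M r (fst x))) (JJ p1 m1)"
  proof (rule V.gsum_cong)
    fix x assume x: "x \<in> JJ p1 m1"
    obtain m2 cs1 where xx: "x = (m2, cs1)" "cs1 \<in> VFP ([p1], m1) ([], m2)" using x by auto
    note e = VFP_elem[OF xx(2)]
    have "gsum \<sigma>V enc_cseq ?F (BB l r x) =
        gsum \<sigma>V enc_cseq (\<lambda>q. ?F (appL (map (lift r) cs1) q)) (VQ l (r, m2))"
      unfolding xx snd_conv fst_conv by (rule V.gsum_image) (auto intro: inj_on_subset[OF inj_appL])
    also have "\<dots> = gsum \<sigma>V enc_cseq (\<lambda>q. act (fw ([p1], m1) cs1) (iprod (wseq (r, m2) q))) (VQ l (r, m2))"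
    proof (rule V.gsum_cong)
      fix q
      have "fw ?c0 (map (lift r) cs1) = fw ([p1], m1) cs1"
        using fw_lift[of "([p1], m1)" cs1 r] e assms by (simp add: lift_def)
      moreover have "last (?c0 # map (lift r) cs1) = (r, m2)"
        using e by (simp add: last_map lift_def)
      ultimately show "?F (appL (map (lift r) cs1) q) = act (fw ([p1], m1) cs1) (iprod (wseq (r, m2) q))"
        by (simp add: iprod_appL)
    qed
    also have "\<dots> = act (fw ([p1], m1) cs1) (momega \<sigma>V iprod n l M r m2)"
      by (simp add: act_gsumV momega_vpaths[OF e(5)])
    finally show "gsum \<sigma>V enc_cseq ?F (BB l r x) = act (fw ([p1], m1) (snd x)) (momega \<sigma>V iprod n l M r (fst x))"
      using xx by simp
  qed
  also have "\<dots> = gsum \<sigma>V enc_cnt (\<lambda>m2. gsum \<sigma>V enc_cnt (\<lambda>cs1. act (fw ([p1], m1) cs1) (momega \<sigma>V iprod n l M r m2))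
         (VFP ([p1], m1) ([], m2))) St"
    using V.gsum_Sigma[of enc_cnt St "\<lambda>m2. VFP ([p1], m1) ([], m2)" enc_cnt enc_cnt
       "\<lambda>x. act (fw ([p1], m1) (snd x)) (momega \<sigma>V iprod n l M r (fst x))"] by simp
  also have "\<dots> = gsum \<sigma>V enc_cnt (\<lambda>m2. act (mstar \<sigma>S n M [p1] [] m1 m2) (momega \<sigma>V iprod n l M r m2)) St"
    by (simp add: act_gsumS mstar_vpaths[OF assms])
  also have "\<dots> = (\<Sum>m2\<in>St. act (mstar \<sigma>S n M [p1] [] m1 m2) (momega \<sigma>V iprod n l M r m2))"
    by (simp add: V.gsum_fin)
  finally show ?thesis .
qed

end

definition LL :: "nat \<Rightarrow> nat \<Rightarrow> nat list set" where
  "LL n k = {ms. length ms = k \<and> set ms \<subseteq> {1..n}}"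

lemma LL_fin: "finite (LL n k)"
  unfolding LL_def using finite_lists_length_eq[of "{1..n}" k] by (simp add: conj_commute)

lemma LL_0: "LL n 0 = {[]}" unfolding LL_def by auto

lemma LL_Suc: "LL n (Suc k) = (\<lambda>(a, xs). a # xs) ` ({1..n} \<times> LL n k)"
proof (rule set_eqI)
  fix ms show "ms \<in> LL n (Suc k) \<longleftrightarrow> ms \<in> (\<lambda>(a, xs). a # xs) ` ({1..n} \<times> LL n k)"
  proof
    assume "ms \<in> LL n (Suc k)"
    then obtain a xs where "ms = a # xs" unfolding LL_def by (cases ms) auto
    thus "ms \<in> (\<lambda>(a, xs). a # xs) ` ({1..n} \<times> LL n k)"
      using \<open>ms \<in> LL n (Suc k)\<close> unfolding LL_def by (intro image_eqI[of _ _ "(a, xs)"]) auto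
  qed (auto simp: LL_def)
qed

lemma sum_LL_Suc: "(\<Sum>ms\<in>LL n (Suc k). f ms) = (\<Sum>a\<in>{1..n}. \<Sum>xs\<in>LL n k. f (a # xs))"
proof -
  have "(\<Sum>ms\<in>LL n (Suc k). f ms) = (\<Sum>x\<in>{1..n} \<times> LL n k. f (fst x # snd x))"
    unfolding LL_Suc by (subst sum.reindex) (auto simp: inj_on_def case_prod_beta)
  also have "\<dots> = (\<Sum>a\<in>{1..n}. \<Sum>xs\<in>LL n k. f (a # xs))"
    by (simp add: sum.cartesian_product split_beta')
  finally show ?thesis .
qed

lemma sum_1_Suc: "(\<Sum>j\<in>{1..Suc k}. g j) = g 1 + (\<Sum>j\<in>{1..k}. g (Suc j))"
proof -
  have "(\<Sum>j\<in>{1..Suc k}. g j) = g 1 + (\<Sum>j\<in>{Suc 1..Suc k}. g j)"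
    by (subst sum.atLeast_Suc_atMost) simp_all
  also have "(\<Sum>j\<in>{Suc 1..Suc k}. g j) = (\<Sum>j\<in>{1..k}. g (Suc j))"
    by (rule sum.shift_bounds_cl_Suc_ivl)
  finally show ?thesis .
qed

lemma finite_len: "finite {ps :: 'g::finite list. length ps = k}"
  using finite_lists_length_eq[of "UNIV :: 'g set" k] by simp

context pda begin

lemma FP_first:
  assumes "c0 \<noteq> c1"
  shows "FP c0 c1 = (\<lambda>(c, cs). c # cs) ` Sigma (UNIV \<times> St) (\<lambda>c. FP c c1)"
proof (rule set_eqI)
  fix xs
  show "xs \<in> FP c0 c1 \<longleftrightarrow> xs \<in> (\<lambda>(c, cs). c # cs) ` Sigma (UNIV \<times> St) (\<lambda>c. FP c c1)"
  proof
    assume "xs \<in> FP c0 c1"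
    then obtain c cs where "xs = c # cs" using assms unfolding FP_def by (cases xs) auto
    thus "xs \<in> (\<lambda>(c, cs). c # cs) ` Sigma (UNIV \<times> St) (\<lambda>c. FP c c1)"
      using \<open>xs \<in> FP c0 c1\<close> unfolding FP_def
      by (intro image_eqI[of _ _ "(c, cs)"]) (auto simp: mem_Times_iff)
  qed (auto simp: FP_def mem_Times_iff)
qed

lemma mstar_first:
  assumes "(\<pi>1, i) \<noteq> (\<pi>2, j)"
  shows "mstar \<sigma>S n M \<pi>1 \<pi>2 i j =
    gsum \<sigma>S enc_cnt (\<lambda>c. M \<pi>1 (fst c) i (snd c) * mstar \<sigma>S n M (fst c) \<pi>2 (snd c) j) (UNIV \<times> St)"
proof -
  let ?c0 = "(\<pi>1, i)" and ?c1 = "(\<pi>2, j)"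
  have "mstar \<sigma>S n M \<pi>1 \<pi>2 i j = gsum \<sigma>S enc_cnt (fw ?c0) ((\<lambda>(c, cs). c # cs) ` Sigma (UNIV \<times> St) (\<lambda>c. FP c ?c1))"
    unfolding mstar_paths FP_first[OF assms] ..
  also have "\<dots> = gsum \<sigma>S enc_cnt (\<lambda>(c, cs). w ?c0 c * fw c cs) (Sigma (UNIV \<times> St) (\<lambda>c. FP c ?c1))"
    by (subst S.gsum_image[where e'=enc_cnt]) (auto intro!: inj_onI simp: case_prod_beta split_beta')
  also have "\<dots> = gsum \<sigma>S enc_cnt (\<lambda>c. gsum \<sigma>S enc_cnt (\<lambda>cs. w ?c0 c * fw c cs) (FP c ?c1)) (UNIV \<times> St)"
    using S.gsum_Sigma[of enc_cnt "UNIV \<times> St" "\<lambda>c. FP c ?c1" enc_cnt enc_cnt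
       "\<lambda>(c,cs). w ?c0 c * fw c cs"] by simp
  also have "\<dots> = gsum \<sigma>S enc_cnt (\<lambda>c. M \<pi>1 (fst c) i (snd c) * mstar \<sigma>S n M (fst c) \<pi>2 (snd c) j) (UNIV \<times> St)"
    by (simp add: gsumS_mult_left mstar_paths w_def)
  finally show ?thesis .
qed

lemma gsum_bylen:
  fixes f :: "'g list \<times> nat \<Rightarrow> 'a::comm_monoid_add"
  assumes "cm \<sigma>"
  shows "gsum \<sigma> enc_cnt f (UNIV \<times> St) = gsum \<sigma> enc_cnt (\<lambda>k. \<Sum>ps\<in>{ps. length ps = k}. \<Sum>m\<in>St. f (ps, m)) UNIV"
proof -
  interpret X: cm \<sigma> by (rule assms)
  have U: "UNIV \<times> St = (\<Union>k\<in>UNIV. {ps :: 'g list. length ps = k} \<times> St)" by auto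
  have "gsum \<sigma> enc_cnt f (UNIV \<times> St) = gsum \<sigma> enc_cnt (\<lambda>k. gsum \<sigma> enc_cnt f ({ps :: 'g list. length ps = k} \<times> St)) UNIV"
    unfolding U by (rule X.gsum_part) auto
  also have "\<dots> = gsum \<sigma> enc_cnt (\<lambda>k. \<Sum>ps\<in>{ps. length ps = k}. \<Sum>m\<in>St. f (ps, m)) UNIV"
    by (rule X.gsum_cong) (simp add: X.gsum_fin finite_len sum.cartesian_product)
  finally show ?thesis .
qed

definition prodc :: "'g list \<Rightarrow> nat list \<Rightarrow> nat \<Rightarrow> 's" where
  "prodc ps ms j = prod_list (map (\<lambda>t. mstar \<sigma>S n M [ps ! t] [] (ms ! t) ((ms @ [j]) ! Suc t)) [0..<length ps])"

lemma prodc_nil: "prodc [] [] j = 1" by (simp add: prodc_def)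

lemma prodc_cons: "length xs = length ps \<Longrightarrow>
    prodc (p # ps) (m # xs) j = mstar \<sigma>S n M [p] [] m ((xs @ [j]) ! 0) * prodc ps xs j"
  unfolding prodc_def by (simp add: upt_conv_Cons map_Suc_upt[symmetric] o_def del: upt_Suc)

lemma mstar_chain:
  "ps \<noteq> [] \<Longrightarrow> m1 \<in> St \<Longrightarrow> mstar \<sigma>S n M ps [] m1 j = (\<Sum>xs\<in>LL n (length ps - 1). prodc ps (m1 # xs) j)"
proof (induction ps arbitrary: m1)
  case Nil thus ?case by simp
next
  case (Cons p ps')
  show ?case
  proof (cases "ps' = []")
    case True
    thus ?thesis by (simp add: LL_0 prodc_def)
  next
    case False
    have "mstar \<sigma>S n M (p # ps') [] m1 j = (\<Sum>m2\<in>St. mstar \<sigma>S n M [p] [] m1 m2 * mstar \<sigma>S n M ps' [] m2 j)"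
      by (rule mstar_cons[OF Cons.prems(2)])
    also have "\<dots> = (\<Sum>m2\<in>St. \<Sum>xs\<in>LL n (length ps' - 1). mstar \<sigma>S n M [p] [] m1 m2 * prodc ps' (m2 # xs) j)"
      using Cons.IH[OF False] by (simp add: sum_distrib_left)
    also have "\<dots> = (\<Sum>m2\<in>St. \<Sum>xs\<in>LL n (length ps' - 1). prodc (p # ps') (m1 # m2 # xs) j)"
    proof (intro sum.cong refl)
      fix m2 xs assume "xs \<in> LL n (length ps' - 1)"
      hence "length (m2 # xs) = length ps'" using False unfolding LL_def by (cases ps') auto
      thus "mstar \<sigma>S n M [p] [] m1 m2 * prodc ps' (m2 # xs) j = prodc (p # ps') (m1 # m2 # xs) j"
        by (simp add: prodc_cons)
    qed
    also have "\<dots> = (\<Sum>ys\<in>LL n (Suc (length ps' - 1)). prodc (p # ps') (m1 # ys) j)"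
      by (simp only: sum_LL_Suc)
    also have "Suc (length ps' - 1) = length (p # ps') - 1" using False by (cases ps') auto
    finally show ?thesis .
  qed
qed

lemma part2_ps:
  assumes "j \<in> St"
  shows "(\<Sum>m1\<in>St. M [p] ps i m1 * mstar \<sigma>S n M ps [] m1 j) =
     (\<Sum>ms\<in>LL n (length ps). M [p] ps i ((ms @ [j]) ! 0) * prodc ps ms j)"
proof (cases ps)
  case Nil
  have "(\<Sum>m1\<in>St. M [p] [] i m1 * mstar \<sigma>S n M [] [] m1 j) = (\<Sum>m1\<in>St. if m1 = j then M [p] [] i m1 else 0)"
    by (rule sum.cong) (auto simp: mstar_nil)
  also have "\<dots> = M [p] [] i j" using assms by (simp add: sum.delta')
  finally show ?thesis using Nil by (simp add: LL_0 prodc_nil)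
next
  case (Cons a ps')
  have "(\<Sum>ms\<in>LL n (length ps). M [p] ps i ((ms @ [j]) ! 0) * prodc ps ms j) =
      (\<Sum>m1\<in>St. \<Sum>xs\<in>LL n (length ps - 1). M [p] ps i m1 * prodc ps (m1 # xs) j)"
    using Cons by (simp add: sum_LL_Suc)
  also have "\<dots> = (\<Sum>m1\<in>St. M [p] ps i m1 * mstar \<sigma>S n M ps [] m1 j)"
    using Cons by (simp add: mstar_chain sum_distrib_left)
  finally show ?thesis ..
qed



definition prodo :: "'g list \<Rightarrow> nat list \<Rightarrow> nat \<Rightarrow> 's" where
  "prodo ps ms j = prod_list (map (\<lambda>t. mstar \<sigma>S n M [ps ! t] [] (ms ! t) (ms ! Suc t)) [0..<j - 1])"

lemma prodo_1: "prodo ps ms 1 = 1" "prodo ps ms (Suc 0) = 1" by (simp_all add: prodo_def)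

lemma prodo_cons: "1 \<le> j \<Longrightarrow> prodo (p # ps) (m # xs) (Suc j) = mstar \<sigma>S n M [p] [] m (xs ! 0) * prodo ps xs j"
  unfolding prodo_def by (cases j) (simp_all add: upt_conv_Cons map_Suc_upt[symmetric] o_def del: upt_Suc)

lemma momega_chain:
  "ps \<noteq> [] \<Longrightarrow> m1 \<in> St \<Longrightarrow> momega \<sigma>V iprod n l M ps m1 =
     (\<Sum>j\<in>{1..length ps}. \<Sum>xs\<in>LL n (j - 1).
        act (prodo ps (m1 # xs) j) (momega \<sigma>V iprod n l M [ps ! (j - 1)] ((m1 # xs) ! (j - 1))))"
proof (induction ps arbitrary: m1)
  case Nil thus ?case by simp
next
  case (Cons p ps')
  show ?case
  proof (cases "ps' = []")
    case True
    thus ?thesis by (simp add: LL_0 prodo_1)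
  next
    case False
    let ?G = "\<lambda>j. \<Sum>xs\<in>LL n (j - 1).
        act (prodo (p # ps') (m1 # xs) j) (momega \<sigma>V iprod n l M [(p # ps') ! (j - 1)] ((m1 # xs) ! (j - 1)))"
    let ?H = "\<lambda>m2 j. \<Sum>xs\<in>LL n (j - 1). act (mstar \<sigma>S n M [p] [] m1 m2 * prodo ps' (m2 # xs) j)
         (momega \<sigma>V iprod n l M [ps' ! (j - 1)] ((m2 # xs) ! (j - 1)))"
    have "momega \<sigma>V iprod n l M (p # ps') m1 = momega \<sigma>V iprod n l M [p] m1 +
        (\<Sum>m2\<in>St. act (mstar \<sigma>S n M [p] [] m1 m2) (momega \<sigma>V iprod n l M ps' m2))"
      by (rule momega_cons[OF Cons.prems(2)])
    also have "(\<Sum>m2\<in>St. act (mstar \<sigma>S n M [p] [] m1 m2) (momega \<sigma>V iprod n l M ps' m2)) =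
        (\<Sum>m2\<in>St. \<Sum>j\<in>{1..length ps'}. ?H m2 j)"
      using Cons.IH[OF False] by (simp add: act_sum act_mult)
    also have "\<dots> = (\<Sum>j\<in>{1..length ps'}. \<Sum>m2\<in>St. ?H m2 j)" by (rule sum.swap)
    also have "\<dots> = (\<Sum>j\<in>{1..length ps'}. ?G (Suc j))"
    proof (rule sum.cong[OF refl])
      fix j assume j: "j \<in> {1..length ps'}"
      then obtain j' where j': "j = Suc j'" by (cases j) auto
      have "?G (Suc j) = (\<Sum>m2\<in>St. \<Sum>xs\<in>LL n j'. act (prodo (p # ps') (m1 # m2 # xs) (Suc j))
          (momega \<sigma>V iprod n l M [(p # ps') ! j] ((m1 # m2 # xs) ! j)))"
        unfolding j' by (simp add: sum_LL_Suc)
      also have "\<dots> = (\<Sum>m2\<in>St. ?H m2 j)"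
        using j unfolding j' by (simp add: prodo_cons)
      finally show "(\<Sum>m2\<in>St. ?H m2 j) = ?G (Suc j)" ..
    qed
    finally have "momega \<sigma>V iprod n l M (p # ps') m1 = momega \<sigma>V iprod n l M [p] m1 + (\<Sum>j\<in>{1..length ps'}. ?G (Suc j))" .
    moreover have "(\<Sum>j\<in>{1..length (p # ps')}. ?G j) = ?G 1 + (\<Sum>j\<in>{1..length ps'}. ?G (Suc j))"
      by (simp only: length_Cons sum_1_Suc)
    moreover have "?G 1 = momega \<sigma>V iprod n l M [p] m1" by (simp add: LL_0 prodo_1)
    ultimately show ?thesis by simp
  qed
qed

lemma part4_ps:
  assumes "ps \<noteq> []"
  shows "(\<Sum>m1\<in>St. act (M [p] ps i m1) (momega \<sigma>V iprod n l M ps m1)) =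
     (\<Sum>j\<in>{1..length ps}. \<Sum>ms\<in>LL n j.
        act (M [p] ps i (ms ! 0) * prodo ps ms j) (momega \<sigma>V iprod n l M [ps ! (j - 1)] (ms ! (j - 1))))"
proof -
  have "(\<Sum>m1\<in>St. act (M [p] ps i m1) (momega \<sigma>V iprod n l M ps m1)) =
     (\<Sum>m1\<in>St. \<Sum>j\<in>{1..length ps}. \<Sum>xs\<in>LL n (j - 1).
        act (M [p] ps i m1 * prodo ps (m1 # xs) j) (momega \<sigma>V iprod n l M [ps ! (j - 1)] ((m1 # xs) ! (j - 1))))"
    using assms by (simp add: momega_chain act_sum act_mult)
  also have "\<dots> = (\<Sum>j\<in>{1..length ps}. \<Sum>m1\<in>St. \<Sum>xs\<in>LL n (j - 1).
        act (M [p] ps i m1 * prodo ps (m1 # xs) j) (momega \<sigma>V iprod n l M [ps ! (j - 1)] ((m1 # xs) ! (j - 1))))"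
    by (rule sum.swap)
  also have "\<dots> = (\<Sum>j\<in>{1..length ps}. \<Sum>ms\<in>LL n j.
        act (M [p] ps i (ms ! 0) * prodo ps ms j) (momega \<sigma>V iprod n l M [ps ! (j - 1)] (ms ! (j - 1))))"
  proof (rule sum.cong[OF refl])
    fix j assume "j \<in> {1..length ps}"
    then obtain j' where j': "j = Suc j'" by (cases j) auto
    show "(\<Sum>m1\<in>St. \<Sum>xs\<in>LL n (j - 1).
        act (M [p] ps i m1 * prodo ps (m1 # xs) j) (momega \<sigma>V iprod n l M [ps ! (j - 1)] ((m1 # xs) ! (j - 1)))) =
        (\<Sum>ms\<in>LL n j. act (M [p] ps i (ms ! 0) * prodo ps ms j) (momega \<sigma>V iprod n l M [ps ! (j - 1)] (ms ! (j - 1))))"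
      unfolding j' by (simp add: sum_LL_Suc)
  qed
  finally show ?thesis .
qed

lemma cmS: "cm \<sigma>S" unfolding cm_def using S.cmon S.zero by blast
lemma cmV: "cm \<sigma>V" unfolding cm_def using V.cmon V.zero by blast

lemma part2:
  assumes "i \<in> St" "j \<in> St"
  shows "mstar \<sigma>S n M [p] [] i j =
        gsum \<sigma>S enc_cnt
          (\<lambda>k. \<Sum>ps\<in>{ps. length ps = k}. \<Sum>ms\<in>{ms. length ms = k \<and> set ms \<subseteq> {1..n}}.
             M [p] ps i ((ms @ [j]) ! 0) *
             prod_list (map (\<lambda>t. mstar \<sigma>S n M [ps ! t] [] (ms ! t) ((ms @ [j]) ! Suc t)) [0..<k]))
          UNIV"
proof -
  have "mstar \<sigma>S n M [p] [] i j =
    gsum \<sigma>S enc_cnt (\<lambda>c. M [p] (fst c) i (snd c) * mstar \<sigma>S n M (fst c) [] (snd c) j) (UNIV \<times> St)"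
    by (rule mstar_first) simp
  also have "\<dots> = gsum \<sigma>S enc_cnt (\<lambda>k. \<Sum>ps\<in>{ps. length ps = k}. \<Sum>m\<in>St. M [p] ps i m * mstar \<sigma>S n M ps [] m j) UNIV"
    using gsum_bylen[OF cmS] by simp
  also have "\<dots> = gsum \<sigma>S enc_cnt
          (\<lambda>k. \<Sum>ps\<in>{ps. length ps = k}. \<Sum>ms\<in>{ms. length ms = k \<and> set ms \<subseteq> {1..n}}.
             M [p] ps i ((ms @ [j]) ! 0) *
             prod_list (map (\<lambda>t. mstar \<sigma>S n M [ps ! t] [] (ms ! t) ((ms @ [j]) ! Suc t)) [0..<k]))
          UNIV"
  proof (rule S.gsum_cong, rule sum.cong[OF refl])
    fix k ps assume "ps \<in> {ps :: 'g list. length ps = k}"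
    hence k: "k = length ps" by simp
    show "(\<Sum>m\<in>St. M [p] ps i m * mstar \<sigma>S n M ps [] m j) =
      (\<Sum>ms\<in>{ms. length ms = k \<and> set ms \<subseteq> {1..n}}. M [p] ps i ((ms @ [j]) ! 0) *
             prod_list (map (\<lambda>t. mstar \<sigma>S n M [ps ! t] [] (ms ! t) ((ms @ [j]) ! Suc t)) [0..<k]))"
      using part2_ps[OF assms(2), of p ps i] unfolding k LL_def prodc_def .
  qed
  finally show ?thesis .
qed

lemma part4:
  assumes "i \<in> St"
  shows "momega \<sigma>V iprod n l M [p] i =
        gsum \<sigma>V enc_cnt
          (\<lambda>k. \<Sum>ps\<in>{ps. length ps = k}. \<Sum>j\<in>{1..k}. \<Sum>ms\<in>{ms. length ms = j \<and> set ms \<subseteq> {1..n}}.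
             act (M [p] ps i (ms ! 0) *
                  prod_list (map (\<lambda>t. mstar \<sigma>S n M [ps ! t] [] (ms ! t) (ms ! Suc t)) [0..<j - 1]))
                 (momega \<sigma>V iprod n l M [ps ! (j - 1)] (ms ! (j - 1))))
          {1..}"
proof -
  let ?f = "\<lambda>k. \<Sum>ps\<in>{ps :: 'g list. length ps = k}. \<Sum>m\<in>St. act (M [p] ps i m) (momega \<sigma>V iprod n l M ps m)"
  have "momega \<sigma>V iprod n l M [p] i =
     gsum \<sigma>V enc_cnt (\<lambda>c. act (M [p] (fst c) i (snd c)) (momega \<sigma>V iprod n l M (fst c) (snd c))) (UNIV \<times> St)"
    by (rule momega_first)
  also have "\<dots> = gsum \<sigma>V enc_cnt ?f UNIV"
    using gsum_bylen[OF cmV] by simp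
  also have "\<dots> = gsum \<sigma>V enc_cnt ?f {1..}"
  proof (rule V.gsum_sub)
    fix k assume "k \<in> UNIV - {1::nat..}"
    hence k: "k = 0" by auto
    have "{ps :: 'g list. length ps = 0} = {[]}" by auto
    thus "?f k = 0" unfolding k by (simp add: momega_nil)
  qed simp_all
  also have "\<dots> = gsum \<sigma>V enc_cnt
          (\<lambda>k. \<Sum>ps\<in>{ps. length ps = k}. \<Sum>j\<in>{1..k}. \<Sum>ms\<in>{ms. length ms = j \<and> set ms \<subseteq> {1..n}}.
             act (M [p] ps i (ms ! 0) *
                  prod_list (map (\<lambda>t. mstar \<sigma>S n M [ps ! t] [] (ms ! t) (ms ! Suc t)) [0..<j - 1]))
                 (momega \<sigma>V iprod n l M [ps ! (j - 1)] (ms ! (j - 1))))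
          {1..}"
  proof (rule V.gsum_cong, rule sum.cong[OF refl])
    fix k ps assume kk: "k \<in> {1::nat..}" and "ps \<in> {ps :: 'g list. length ps = k}"
    hence k: "k = length ps" by simp
    have "ps \<noteq> []" using kk k by auto
    thus "(\<Sum>m\<in>St. act (M [p] ps i m) (momega \<sigma>V iprod n l M ps m)) =
      (\<Sum>j\<in>{1..k}. \<Sum>ms\<in>{ms. length ms = j \<and> set ms \<subseteq> {1..n}}.
             act (M [p] ps i (ms ! 0) *
                  prod_list (map (\<lambda>t. mstar \<sigma>S n M [ps ! t] [] (ms ! t) (ms ! Suc t)) [0..<j - 1]))
                 (momega \<sigma>V iprod n l M [ps ! (j - 1)] (ms ! (j - 1))))"
      using part4_ps[of ps p i] unfolding k LL_def prodo_def by simp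
  qed
  finally show ?thesis .
qed

end


theorem theorem13:
  fixes \<sigma>S :: "(idx \<Rightarrow> 's::semiring_1) \<Rightarrow> idx set \<Rightarrow> 's"
    and \<sigma>V :: "(idx \<Rightarrow> 'v::comm_monoid_add) \<Rightarrow> idx set \<Rightarrow> 'v"
    and act :: "'s \<Rightarrow> 'v \<Rightarrow> 'v"
    and iprod :: "(nat \<Rightarrow> 's) \<Rightarrow> 'v"
    and S' :: "'s set"
    and n :: nat
    and M :: "'g::finite list \<Rightarrow> 'g list \<Rightarrow> nat \<Rightarrow> nat \<Rightarrow> 's"
    and I P :: "nat \<Rightarrow> 's"
    and p0 :: 'g
    and l :: nat
  assumes pair: "complete_ssp \<sigma>S \<sigma>V act iprod"
    and S'01: "0 \<in> S'" "1 \<in> S'"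
    and aut: "omega_pda S' n M I P p0 l"
  shows
    "fst (pda_behavior \<sigma>S \<sigma>V act iprod n M I P p0 l) =
       (\<Sum>m1\<in>{1..n}. \<Sum>m2\<in>{1..n}. I m1 * mstar \<sigma>S n M [p0] [] m1 m2 * P m2)
   \<and> (\<forall>p. \<forall>i\<in>{1..n}. \<forall>j\<in>{1..n}.
        mstar \<sigma>S n M [p] [] i j =
        gsum \<sigma>S enc_cnt
          (\<lambda>k. \<Sum>ps\<in>{ps. length ps = k}. \<Sum>ms\<in>{ms. length ms = k \<and> set ms \<subseteq> {1..n}}.
             M [p] ps i ((ms @ [j]) ! 0) *
             prod_list (map (\<lambda>t. mstar \<sigma>S n M [ps ! t] [] (ms ! t) ((ms @ [j]) ! Suc t)) [0..<k]))
          UNIV)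
   \<and> snd (pda_behavior \<sigma>S \<sigma>V act iprod n M I P p0 l) =
       (\<Sum>m\<in>{1..n}. act (I m) (momega \<sigma>V iprod n l M [p0] m))
   \<and> (\<forall>p. \<forall>i\<in>{1..n}.
        momega \<sigma>V iprod n l M [p] i =
        gsum \<sigma>V enc_cnt
          (\<lambda>k. \<Sum>ps\<in>{ps. length ps = k}. \<Sum>j\<in>{1..k}. \<Sum>ms\<in>{ms. length ms = j \<and> set ms \<subseteq> {1..n}}.
             act (M [p] ps i (ms ! 0) *
                  prod_list (map (\<lambda>t. mstar \<sigma>S n M [ps ! t] [] (ms ! t) (ms ! Suc t)) [0..<j - 1]))
                 (momega \<sigma>V iprod n l M [ps ! (j - 1)] (ms ! (j - 1))))
          {1..})
   \<and> pda_behavior \<sigma>S \<sigma>V act iprod n M I P p0 l =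
       ((\<Sum>j\<in>{1..n}. (\<Sum>m\<in>{1..n}. I m * mstar \<sigma>S n M [p0] [] m j) * P j),
        (\<Sum>m\<in>{1..n}. act (I m) (momega \<sigma>V iprod n l M [p0] m)))"
proof -
  have pdm: "pushdown_matrix n M" using aut unfolding omega_pda_def by blast
  interpret P: pda \<sigma>S \<sigma>V act iprod n M using pair pdm by unfold_locales
  have c1: "fst (pda_behavior \<sigma>S \<sigma>V act iprod n M I P p0 l) =
       (\<Sum>m1\<in>{1..n}. \<Sum>m2\<in>{1..n}. I m1 * mstar \<sigma>S n M [p0] [] m1 m2 * P m2)"
    unfolding pda_behavior_def by (simp add: sum_distrib_right) (rule sum.swap)
  show ?thesis
    using c1 P.part2 P.part4[of _ l] by (simp add: pda_behavior_def)
qed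

end
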